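(* Let ${\cal H}_B,{\cal H}_C$ have dimensions $d_B\le d_C$. Let $(\varphi_i,M_i)_{i=1}^N$ consist of pure states $\ket{\varphi_i}\in{\cal H}_B\otimes{\cal H}_C$ with $E(\varphi_i)\ge\log d_B-\delta$ for all $i$ (some $\delta\ge0$), and a POVM $(M_i)_{i=1}^N$ all of whose elements are PPT, such that $\tr(\varphi_iM_i)\ge1-\epsilon$ for all $i$. If $\epsilon+\sqrt2\,\delta^{1/4}<1$, then $$N\le\bigl(1-\epsilon-\sqrt2\,\delta^{1/4}\bigr)^{-1}d_C.$$
   Context: Logarithms are base 2. $E(\varphi)=S(\tr_C\varphi)$ for pure $\varphi$. An operator $M$ on ${\cal H}_B\otimes{\cal H}_C$ is PPT if its partial transpose $M^\Gamma$ (with respect to a fixed product basis: $\ket{ij}\bra{kl}\mapsto\ket{il}\bra{kj}$) is positive semidefinite. *)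

theory Defs
  imports "Jordan_Normal_Form.Char_Poly" Complex_Main
begin

text \<open>H_B = C^dB, H_C = C^dC, and H_B (x) H_C = C^(dB*dC) with the
fixed product basis: the basis vector |j k> (j < dB, k < dC) has index j*dC + k.\<close>

definition prod_idx :: "nat \<Rightarrow> nat \<Rightarrow> nat \<Rightarrow> nat" where
  "prod_idx dC j k = j * dC + k"

definition unit_vec_state :: "nat \<Rightarrow> complex vec \<Rightarrow> bool" where
  "unit_vec_state n v \<longleftrightarrow> v \<in> carrier_vec n \<and> (\<Sum>k<n. (cmod (v $ k))^2) = 1"

definition proj :: "complex vec \<Rightarrow> complex mat" where
  "proj v = mat (dim_vec v) (dim_vec v) (\<lambda>(a,b). v $ a * cnj (v $ b))"

definition mtrace :: "complex mat \<Rightarrow> complex" where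
  "mtrace A = (\<Sum>a<dim_row A. A $$ (a,a))"

definition psd :: "nat \<Rightarrow> complex mat \<Rightarrow> bool" where
  "psd n A \<longleftrightarrow> A \<in> carrier_mat n n \<and>
     (\<forall>x \<in> carrier_vec n. let q = (\<Sum>a<n. \<Sum>b<n. cnj (x $ a) * A $$ (a,b) * x $ b)
                          in Im q = 0 \<and> Re q \<ge> 0)"

definition ptrace_C :: "nat \<Rightarrow> nat \<Rightarrow> complex mat \<Rightarrow> complex mat" where
  "ptrace_C dB dC M = mat dB dB (\<lambda>(j,j'). \<Sum>k<dC. M $$ (prod_idx dC j k, prod_idx dC j' k))"

text \<open>Partial transpose: |ij><kl| maps to |il><kj| (transpose on the C factor).\<close>
definition ptranspose :: "nat \<Rightarrow> nat \<Rightarrow> complex mat \<Rightarrow> complex mat" where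
  "ptranspose dB dC M = mat (dB*dC) (dB*dC)
     (\<lambda>(a,b). M $$ (prod_idx dC (a div dC) (b mod dC), prod_idx dC (b div dC) (a mod dC)))"

definition PPT :: "nat \<Rightarrow> nat \<Rightarrow> complex mat \<Rightarrow> bool" where
  "PPT dB dC M \<longleftrightarrow> psd (dB*dC) (ptranspose dB dC M)"

definition vn_entropy :: "complex mat \<Rightarrow> real" where
  "vn_entropy A = - (\<Sum>a \<in> {a. poly (char_poly A) a = 0}.
       real (order a (char_poly A)) * (if Re a = 0 then 0 else Re a * log 2 (Re a)))"

definition ent :: "nat \<Rightarrow> nat \<Rightarrow> complex vec \<Rightarrow> real" where
  "ent dB dC v = vn_entropy (ptrace_C dB dC (proj v))"

definition POVM :: "nat \<Rightarrow> nat \<Rightarrow> (nat \<Rightarrow> complex mat) \<Rightarrow> bool" where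
  "POVM n N M \<longleftrightarrow> (\<forall>i<N. psd n (M i)) \<and>
     (\<forall>a<n. \<forall>b<n. (\<Sum>i<N. M i $$ (a,b)) = (if a = b then 1 else 0))"

end

theory Submission
  imports Defs
begin


definition orthon :: "nat \<Rightarrow> (nat \<Rightarrow> nat \<Rightarrow> complex) \<Rightarrow> bool" where
  "orthon n u \<longleftrightarrow> (\<forall>i<n. \<forall>j<n. (\<Sum>a<n. cnj (u i a) * u j a) = (if i = j then 1 else 0))"
definition complete :: "nat \<Rightarrow> (nat \<Rightarrow> nat \<Rightarrow> complex) \<Rightarrow> bool" where
  "complete n u \<longleftrightarrow> (\<forall>a<n. \<forall>b<n. (\<Sum>k<n. u k a * cnj (u k b)) = (if a = b then 1 else 0))"
definition decomp :: "nat \<Rightarrow> (nat \<Rightarrow> nat \<Rightarrow> complex) \<Rightarrow> (nat \<Rightarrow> nat \<Rightarrow> complex) \<Rightarrow> (nat \<Rightarrow> real) \<Rightarrow> bool" where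
  "decomp n A u lam \<longleftrightarrow> (\<forall>a<n. \<forall>b<n. A a b = (\<Sum>k<n. of_real (lam k) * u k a * cnj (u k b)))"
definition herm :: "nat \<Rightarrow> (nat \<Rightarrow> nat \<Rightarrow> complex) \<Rightarrow> bool" where
  "herm n A \<longleftrightarrow> (\<forall>a<n. \<forall>b<n. A b a = cnj (A a b))"

lemma sum_delta_right'[simp]: "a < (n::nat) \<Longrightarrow> (\<Sum>b<n. (f b :: complex) * (if a = b then 1 else 0)) = f a"
proof -
  assume a: "a < n"
  have "(\<Sum>b<n. f b * (if a = b then 1 else 0)) = (\<Sum>b\<in>{..<n}. if a = b then f b else 0)"
    by (rule sum.cong) auto
  then show ?thesis using a by (simp add: sum.delta')
qed
lemma sum_delta_left'[simp]: "a < (n::nat) \<Longrightarrow> (\<Sum>b<n. (if b = a then 1 else 0) * (f b :: complex)) = f a"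
proof -
  assume a: "a < n"
  have "(\<Sum>b<n. (if b = a then 1 else 0) * f b) = (\<Sum>b\<in>{..<n}. if b = a then f b else 0)"
    by (rule sum.cong) auto
  then show ?thesis using a by (simp add: sum.delta)
qed

lemma herm_D: "herm n A \<Longrightarrow> a < n \<Longrightarrow> b < n \<Longrightarrow> A b a = cnj (A a b)"
  unfolding herm_def by blast
lemma herm_cnj: "herm n A \<Longrightarrow> a < n \<Longrightarrow> b < n \<Longrightarrow> cnj (A a b) = A b a"
  using herm_D[of n A a b] by simp

lemma sum_delta_left[simp]: "a < (n::nat) \<Longrightarrow> (\<Sum>b<n. (if a = b then 1 else 0) * (f b :: complex)) = f a"
proof -
  assume a: "a < n"
  have "(\<Sum>b<n. (if a = b then 1 else 0) * f b) = (\<Sum>b\<in>{..<n}. if a = b then f b else 0)"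
    by (rule sum.cong) auto
  then show ?thesis using a by (simp add: sum.delta')
qed
lemma sum_delta_right[simp]: "a < (n::nat) \<Longrightarrow> (\<Sum>b<n. (f b :: complex) * (if b = a then 1 else 0)) = f a"
proof -
  assume a: "a < n"
  have "(\<Sum>b<n. f b * (if b = a then 1 else 0)) = (\<Sum>b\<in>{..<n}. if b = a then f b else 0)"
    by (rule sum.cong) auto
  then show ?thesis using a by (simp add: sum.delta)
qed

lemma sum3_rot: fixes n m p :: nat shows "(\<Sum>a<n. \<Sum>i<m. \<Sum>j<p. f a i j) = (\<Sum>i<m. \<Sum>j<p. \<Sum>a<(n::nat). (f a i j :: 'a::comm_monoid_add))"
proof -
  have "(\<Sum>a<n. \<Sum>i<m. \<Sum>j<p. f a i j) = (\<Sum>i<m. \<Sum>a<n. \<Sum>j<p. f a i j)" by (rule sum.swap)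
  also have "\<dots> = (\<Sum>i<m. \<Sum>j<p. \<Sum>a<n. f a i j)" by (rule sum.cong[OF refl], rule sum.swap)
  finally show ?thesis .
qed

lemma sum4_rot: fixes n1 n2 n3 n4 :: nat shows "(\<Sum>i<n1. \<Sum>j<n2. \<Sum>c<n3. \<Sum>d<n4. g i j c d) = (\<Sum>c<n3. \<Sum>d<n4. \<Sum>i<n1. \<Sum>j<(n2::nat). (g i j c d :: 'a::comm_monoid_add))"
proof -
  have "(\<Sum>i<n1. \<Sum>j<n2. \<Sum>c<n3. \<Sum>d<n4. g i j c d) = (\<Sum>i<n1. \<Sum>c<n3. \<Sum>d<n4. \<Sum>j<n2. g i j c d)"
    by (rule sum.cong[OF refl], rule sum3_rot)
  also have "\<dots> = (\<Sum>c<n3. \<Sum>d<n4. \<Sum>i<n1. \<Sum>j<(n2::nat). g i j c d)"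
    by (rule sum3_rot[where f="\<lambda>i c d. \<Sum>j<n2. g i j c d"])
  finally show ?thesis .
qed

lemma sum_prod3: "(\<Sum>i\<in>I. \<Sum>j\<in>J. f i * c * g j) = (\<Sum>i\<in>I. f i) * c * (\<Sum>j\<in>J. (g j::complex))"
proof -
  have "(\<Sum>i\<in>I. f i) * c * (\<Sum>j\<in>J. g j) = (\<Sum>i\<in>I. f i * c) * (\<Sum>j\<in>J. g j)"
    by (subst sum_distrib_right) (rule refl)
  also have "\<dots> = (\<Sum>i\<in>I. \<Sum>j\<in>J. f i * c * g j)" by (rule sum_product)
  finally show ?thesis by simp
qed

lemma transform:
  fixes H A A' Y :: "nat \<Rightarrow> nat \<Rightarrow> complex"
  assumes Hh: "herm n H"
    and Hu: "\<And>a c. a < n \<Longrightarrow> c < n \<Longrightarrow> (\<Sum>b<n. H a b * H b c) = (if a = c then 1 else 0)"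
    and Yo: "orthon n Y" and Yc: "complete n Y" and Yd: "decomp n A' Y lam"
    and A': "\<And>i j. i < n \<Longrightarrow> j < n \<Longrightarrow> A' i j = (\<Sum>a<n. \<Sum>b<n. H i a * A a b * H b j)"
  defines "U \<equiv> (\<lambda>k a. \<Sum>i<n. H a i * Y k i)"
  shows "orthon n U \<and> complete n U \<and> decomp n A U lam"
proof (intro conjI)
  have hc: "cnj (H a b) = H b a" if "a < n" "b < n" for a b using herm_cnj[OF Hh that] .
  show "orthon n U" unfolding orthon_def
  proof (intro allI impI)
    fix k l assume k: "k < n" and l: "l < n"
    have "(\<Sum>a<n. cnj (U k a) * U l a) = (\<Sum>a<n. \<Sum>i<n. \<Sum>j<n. cnj (Y k i) * Y l j * (H i a * H a j))"
      unfolding U_def cnj_sum sum_product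
      by (intro sum.cong refl, simp add: hc mult_ac)
    also have "\<dots> = (\<Sum>i<n. \<Sum>j<n. cnj (Y k i) * Y l j * (\<Sum>a<n. H i a * H a j))"
      by (subst sum3_rot) (simp only: sum_distrib_left)
    also have "\<dots> = (\<Sum>i<n. \<Sum>j<n. cnj (Y k i) * Y l j * (if i = j then 1 else 0))"
      by (intro sum.cong refl, simp add: Hu)
    also have "\<dots> = (\<Sum>i<n. cnj (Y k i) * Y l i)"
      by (intro sum.cong refl) simp
    also have "\<dots> = (if k = l then 1 else 0)" using Yo k l unfolding orthon_def by auto
    finally show "(\<Sum>a<n. cnj (U k a) * U l a) = (if k = l then 1 else 0)" .
  qed
  show "complete n U" unfolding complete_def
  proof (intro allI impI)
    fix a b assume a: "a < n" and b: "b < n"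
    have "(\<Sum>k<n. U k a * cnj (U k b)) = (\<Sum>k<n. \<Sum>i<n. \<Sum>j<n. H a i * H j b * (Y k i * cnj (Y k j)))"
      unfolding U_def cnj_sum sum_product
      using a b by (intro sum.cong refl, simp add: hc mult_ac)
    also have "\<dots> = (\<Sum>i<n. \<Sum>j<n. H a i * H j b * (\<Sum>k<n. Y k i * cnj (Y k j)))"
      by (subst sum3_rot) (simp only: sum_distrib_left)
    also have "\<dots> = (\<Sum>i<n. \<Sum>j<n. H a i * H j b * (if i = j then 1 else 0))"
      using Yc unfolding complete_def by (intro sum.cong refl, simp)
    also have "\<dots> = (\<Sum>i<n. H a i * H i b)"
      by (intro sum.cong refl) simp
    also have "\<dots> = (if a = b then 1 else 0)" using Hu a b by auto
    finally show "(\<Sum>k<n. U k a * cnj (U k b)) = (if a = b then 1 else 0)" .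
  qed
  show "decomp n A U lam" unfolding decomp_def
  proof (intro allI impI)
    fix a b assume a: "a < n" and b: "b < n"
    have eqk: "of_real (lam k) * U k a * cnj (U k b) = (\<Sum>i<n. \<Sum>j<n. H a i * H j b * (of_real (lam k) * Y k i * cnj (Y k j)))" for k
    proof -
      have "of_real (lam k) * U k a * cnj (U k b) = of_real (lam k) * ((\<Sum>i<n. H a i * Y k i) * (\<Sum>j<n. cnj (H b j * Y k j)))"
        by (simp add: U_def cnj_sum mult.assoc)
      also have "\<dots> = (\<Sum>i<n. \<Sum>j<n. of_real (lam k) * ((H a i * Y k i) * cnj (H b j * Y k j)))"
        by (unfold sum_product, unfold sum_distrib_left, rule refl)
      also have "\<dots> = (\<Sum>i<n. \<Sum>j<n. H a i * H j b * (of_real (lam k) * Y k i * cnj (Y k j)))"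
        using a b by (intro sum.cong refl) (simp add: hc mult_ac)
      finally show ?thesis .
    qed
    have "(\<Sum>k<n. of_real (lam k) * U k a * cnj (U k b))
        = (\<Sum>k<n. \<Sum>i<n. \<Sum>j<n. H a i * H j b * (of_real (lam k) * Y k i * cnj (Y k j)))"
      by (intro sum.cong refl) (rule eqk)
    also have "\<dots> = (\<Sum>i<n. \<Sum>j<n. H a i * H j b * (\<Sum>k<n. of_real (lam k) * Y k i * cnj (Y k j)))"
      by (subst sum3_rot) (simp only: sum_distrib_left)
    also have "\<dots> = (\<Sum>i<n. \<Sum>j<n. H a i * H j b * A' i j)"
      using Yd unfolding decomp_def by (intro sum.cong refl) simp
    also have "\<dots> = (\<Sum>i<n. \<Sum>j<n. \<Sum>c<n. \<Sum>d<n. (H a i * H i c) * A c d * (H d j * H j b))"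
      by (intro sum.cong refl, simp add: A' sum_distrib_left mult_ac)
    also have "\<dots> = (\<Sum>c<n. \<Sum>d<n. \<Sum>i<n. \<Sum>j<n. (H a i * H i c) * A c d * (H d j * H j b))"
      by (rule sum4_rot)
    also have "\<dots> = (\<Sum>c<n. \<Sum>d<n. (\<Sum>i<n. H a i * H i c) * A c d * (\<Sum>j<n. H d j * H j b))"
      by (intro sum.cong refl) (rule sum_prod3)
    also have "\<dots> = (\<Sum>c<n. \<Sum>d<n. (if a = c then 1 else 0) * (A c d * (if d = b then 1 else 0)))"
      using a b by (intro sum.cong refl) (simp add: Hu)
    also have "\<dots> = (\<Sum>c<n. (if a = c then 1 else 0) * A c b)"
      using b by (intro sum.cong refl) (simp add: sum_distrib_left[symmetric])
    also have "\<dots> = A a b" using a by simp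
    finally show "A a b = (\<Sum>k<n. of_real (lam k) * U k a * cnj (U k b))" by simp
  qed
qed


lemma eigvec_exists:
  fixes A :: "nat \<Rightarrow> nat \<Rightarrow> complex"
  assumes n: "0 < n"
  shows "\<exists>x e. (\<exists>a<n. x a \<noteq> 0) \<and> (\<forall>a<n. (\<Sum>b<n. A a b * x b) = e * x a)"
proof -
  let ?A = "mat n n (\<lambda>(a,b). A a b)"
  have Ac: "?A \<in> carrier_mat n n" by simp
  obtain es where es: "char_poly ?A = (\<Prod>a\<leftarrow>es. [:- a, 1:])" "length es = n"
    using char_poly_factorized[OF Ac] by blast
  then obtain e es' where "es = e # es'" using n by (cases es) auto
  then have "poly (char_poly ?A) e = 0" using es(1) by simp
  hence "eigenvalue ?A e" using eigenvalue_root_char_poly[OF Ac] by simp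
  then obtain v where v: "eigenvector ?A v e" unfolding eigenvalue_def by blast
  hence vc: "v \<in> carrier_vec n" "v \<noteq> 0\<^sub>v n" "?A *\<^sub>v v = e \<cdot>\<^sub>v v" unfolding eigenvector_def by auto
  have "\<exists>a<n. v $ a \<noteq> 0"
  proof (rule ccontr)
    assume "\<not> ?thesis"
    hence "v = 0\<^sub>v n" using vc(1) by (intro eq_vecI) auto
    with vc(2) show False by simp
  qed
  moreover have "\<forall>a<n. (\<Sum>b<n. A a b * v $ b) = e * v $ a"
  proof (intro allI impI)
    fix a assume a: "a < n"
    have "(?A *\<^sub>v v) $ a = (e \<cdot>\<^sub>v v) $ a" using vc(3) by simp
    thus "(\<Sum>b<n. A a b * v $ b) = e * v $ a" using a vc(1)
      by (simp add: scalar_prod_def atLeast0LessThan)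
  qed
  ultimately show ?thesis by blast
qed

lemma aux_t: "(t::real) \<noteq> 0 \<Longrightarrow> (1/t)*(1/t)*(2*t) = 2*(1/t)"
  by (simp add: field_simps power2_eq_square)

lemma householder:
  fixes u :: "nat \<Rightarrow> complex"
  assumes un: "(\<Sum>a<n. cnj (u a) * u a) = 1" and u0: "u 0 = of_real r" and n: "0 < n"
  shows "\<exists>H. herm n H \<and> (\<forall>a<n. \<forall>d<n. (\<Sum>b<n. H a b * H b d) = (if a = d then 1 else 0))
             \<and> (\<forall>a<n. H a 0 = u a)"
proof -
  define w where "w = (\<lambda>a. (if a = 0 then 1 else 0) - u a)"
  define c where "c = (of_real (if r = 1 then 0 else 1 / (1 - r)) :: complex)"
  define H where "H = (\<lambda>a b. (if a = b then 1 else 0) - c * w a * cnj (w b))"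
  have cc: "cnj c = c" unfolding c_def by simp
  have nw: "(\<Sum>b<n. cnj (w b) * w b) = 2 - 2 * of_real r"
  proof -
    have "(\<Sum>b<n. cnj (w b) * w b) = (\<Sum>b<n. (if b = 0 then 1 else 0) - (if b = 0 then cnj (u b) else 0) - (if b = 0 then u b else 0) + cnj (u b) * u b)"
      unfolding w_def by (intro sum.cong refl) (auto simp: algebra_simps)
    also have "\<dots> = 2 - 2 * of_real r" using n un u0
      by (simp add: sum.distrib sum_subtractf)
    finally show ?thesis .
  qed
  have herm: "herm n H" unfolding herm_def H_def using cc by (auto simp: mult_ac)
  have key: "c * c * (2 - 2 * of_real r) = 2 * c"
  proof (cases "r = 1")
    case True thus ?thesis by (simp add: c_def)
  next
    case False
    hence ne: "1 - r \<noteq> 0" by simp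
    have e: "2-2*r = 2*(1-r)" by simp
    have "(1/(1-r))*(1/(1-r))*(2-2*r) = 2*(1/(1-r))"
      unfolding e by (rule aux_t[OF ne])
    hence "complex_of_real ((1/(1-r))*(1/(1-r))*(2-2*r)) = complex_of_real (2*(1/(1-r)))" by simp
    thus ?thesis using False unfolding c_def by simp
  qed
  have unit: "(\<Sum>b<n. H a b * H b d) = (if a = d then 1 else 0)" if a: "a < n" and d: "d < n" for a d
  proof -
    have "(\<Sum>b<n. H a b * H b d) = (\<Sum>b<n. (if a = b then 1 else 0) * (if b = d then 1 else 0)
          - (if a = b then 1 else 0) * (c * w b * cnj (w d)) - (c * w a * cnj (w b)) * (if b = d then 1 else 0)
          + c * c * w a * cnj (w d) * (cnj (w b) * w b))"
      unfolding H_def by (intro sum.cong refl) (simp add: algebra_simps)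
    also have "\<dots> = (if a = d then 1 else 0) - c * w a * cnj (w d) - c * w a * cnj (w d)
          + c * c * w a * cnj (w d) * (\<Sum>b<n. cnj (w b) * w b)"
      using a d by (simp add: sum.distrib sum_subtractf sum_distrib_left del: mult_1 mult_zero_left)
    also have "\<dots> = (if a = d then 1 else 0)"
    proof -
      have "c*c*w a*cnj(w d)*(2-2*of_real r) = (c*c*(2-2*of_real r))*(w a*cnj(w d))" by (simp add: algebra_simps)
      also have "\<dots> = 2*c*(w a*cnj(w d))" using key by simp
      finally have k2: "c*c*w a*cnj(w d)*(2-2*of_real r) = 2*c*(w a*cnj(w d))" .
      show ?thesis unfolding nw k2 by (simp add: algebra_simps)
    qed
    finally show ?thesis .
  qed
  have col: "H a 0 = u a" if a: "a < n" for a
  proof (cases "r = 1")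
    case True
    have "(\<Sum>b<n. complex_of_real ((cmod (w b))\<^sup>2)) = (\<Sum>b<n. cnj (w b) * w b)"
      by (rule sum.cong[OF refl]) (subst complex_norm_square, rule mult.commute)
    also have "\<dots> = 0" using nw True by simp
    finally have "complex_of_real (\<Sum>b<n. (cmod (w b))\<^sup>2) = 0" by (simp only: of_real_sum)
    hence "(\<Sum>b<n. (cmod (w b))\<^sup>2) = 0" by (simp only: of_real_eq_0_iff)
    hence "(cmod (w a))\<^sup>2 = 0" using a by (subst (asm) sum_nonneg_eq_0_iff) auto
    hence "w a = 0" by simp
    thus ?thesis unfolding H_def c_def w_def using True by auto
  next
    case False
    have "c * cnj (w 0) = 1" unfolding c_def w_def using u0 False n
      by (simp add: field_simps)
    have "H a 0 = (if a = 0 then 1 else 0) - w a * (c * cnj (w 0))" unfolding H_def by (simp add: mult_ac)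
    also have "\<dots> = u a" using \<open>c * cnj (w 0) = 1\<close> unfolding w_def by simp
    finally show ?thesis .
  qed
  show ?thesis using herm unit col by blast
qed


lemma mcnj: "z * cnj z = complex_of_real (cmod z) * complex_of_real (cmod z)"
  by (metis complex_norm_square of_real_mult power2_eq_square)
lemma pp_lem: fixes x0 :: complex assumes False: "x0 \<noteq> 0" and p_def: "p = cnj x0 / of_real (cmod x0)"
  shows "cnj p * p = 1"
proof -
    have "cnj p * p = (x0 * cnj (x0)) / (of_real (cmod (x0)) * of_real (cmod (x0)))"
      using False by (simp add: p_def)
    also have "\<dots> = 1" using False unfolding mcnj by simp
    finally show ?thesis .
qed
lemma u0_lem: fixes x0 :: complex assumes False: "x0 \<noteq> 0" and p_def: "p = cnj x0 / of_real (cmod x0)"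
  shows "p * x0 = of_real (cmod x0)"
proof -
    have "p * x0 = (x0 * cnj (x0)) / of_real (cmod (x0))" using False by (simp add: p_def mult_ac)
    also have "\<dots> = of_real (cmod (x0))" using False unfolding mcnj by simp
    finally show ?thesis .
qed
lemma mcnj2: "z * cnj z = complex_of_real ((cmod z)^2)"
  by (metis complex_norm_square)
lemma cu_lem: fixes x :: "nat \<Rightarrow> complex" assumes pp: "cnj p * p = 1" and nxpos: "nx > 0" and u_def: "u = (\<lambda>a. p / of_real (sqrt nx) * x a)"
  shows "cnj (u a) * u a = of_real ((cmod (x a))^2 / nx)"
  proof -
    have "cnj (u a) * u a = (cnj p * p) * (x a * cnj (x a)) / (of_real (sqrt nx) * of_real (sqrt nx))"
      unfolding u_def by (simp add: field_simps)
    also have "sqrt nx * sqrt nx = nx" using nxpos by simp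
    hence "of_real (sqrt nx) * of_real (sqrt nx) = (of_real nx :: complex)"
      by (metis of_real_mult)
    finally show ?thesis unfolding pp mcnj2 by simp
  qed

lemma ue_lem: fixes x u :: "nat \<Rightarrow> complex" assumes xe: "\<forall>a<n. (\<Sum>b<n. A a b * x b) = e * x a"
  and u_def: "u = (\<lambda>a. p / of_real (sqrt nx) * x a)" and a: "a < n"
  shows "(\<Sum>b<n. A a b * u b) = e * u a"
  proof -
    have "(\<Sum>b<n. A a b * u b) = p / of_real (sqrt nx) * (\<Sum>b<n. A a b * x b)"
      by (simp add: u_def sum_distrib_left mult_ac)
    also have "\<dots> = e * u a" using xe a by (simp add: u_def mult_ac)
    finally show ?thesis .
  qed

lemma cnj_eq_real: "cnj e = e \<Longrightarrow> e = complex_of_real (Re e)"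
  by (simp add: complex_eq_iff)

lemma spectral:
  fixes A :: "nat \<Rightarrow> nat \<Rightarrow> complex"
  assumes "herm n A"
  shows "\<exists>u lam. orthon n u \<and> complete n u \<and> decomp n A u lam"
  using assms
proof (induction n arbitrary: A)
  case 0
  show ?case unfolding orthon_def complete_def decomp_def by simp
next
  case (Suc m)
  define n where "n = Suc m"
  have n0: "0 < n" unfolding n_def by simp
  have hA: "cnj (A a b) = A b a" if "a < n" "b < n" for a b using herm_cnj[OF Suc.prems[folded n_def] that] .
  obtain x e where x0: "\<exists>a<n. x a \<noteq> 0" and xe: "\<forall>a<n. (\<Sum>b<n. A a b * x b) = e * x a"
    using eigvec_exists[OF n0, of A] by auto
  define nx where "nx = (\<Sum>a<n. (cmod (x a))^2)"
  have nxpos: "nx > 0"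
  proof -
    from x0 obtain a where a: "a < n" "x a \<noteq> 0" by auto
    show ?thesis unfolding nx_def by (rule sum_pos2[of _ a]) (use a in auto)
  qed
  define p where "p = (if x 0 = 0 then 1 else cnj (x 0) / of_real (cmod (x 0)))"
  have pp: "cnj p * p = 1"
  proof (cases "x 0 = 0")
    case True thus ?thesis by (simp add: p_def)
  next
    case False thus ?thesis using pp_lem[of "x 0" p] by (simp add: p_def)
  qed
  define u where "u = (\<lambda>a. p / of_real (sqrt nx) * x a)"
  have cu: "cnj (u a) * u a = of_real ((cmod (x a))^2 / nx)" for a
    by (rule cu_lem[OF pp nxpos u_def])
  have un: "(\<Sum>a<n. cnj (u a) * u a) = 1"
  proof -
    have "(\<Sum>a<n. cnj (u a) * u a) = of_real (\<Sum>a<n. (cmod (x a))^2 / nx)"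
      by (simp add: cu of_real_sum)
    also have "(\<Sum>a<n. (cmod (x a))^2 / nx) = 1" using nxpos
      by (simp add: sum_divide_distrib[symmetric] nx_def)
    finally show ?thesis by simp
  qed
  have ue: "(\<Sum>b<n. A a b * u b) = e * u a" if a: "a < n" for a
    by (rule ue_lem[OF xe u_def a])
  have u0: "u 0 = of_real (cmod (x 0) / sqrt nx)"
  proof (cases "x 0 = 0")
    case True thus ?thesis by (simp add: u_def)
  next
    case False
    have "p * x 0 = of_real (cmod (x 0))" using u0_lem[of "x 0" p] False by (simp add: p_def)
    thus ?thesis by (simp add: u_def)
  qed
  obtain H where Hh: "herm n H" and Hu: "\<forall>a<n. \<forall>d<n. (\<Sum>b<n. H a b * H b d) = (if a = d then 1 else 0)"
    and Hc: "\<forall>a<n. H a 0 = u a"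
    using householder[OF un u0 n0] by auto
  have hcH: "cnj (H a b) = H b a" if "a < n" "b < n" for a b using herm_cnj[OF Hh that] .
  define A' where "A' = (\<lambda>i j. \<Sum>a<n. \<Sum>b<n. H i a * A a b * H b j)"
  have A'col: "A' i 0 = e * (if i = 0 then 1 else 0)" if i: "i < n" for i
  proof -
    have "A' i 0 = (\<Sum>a<n. H i a * (\<Sum>b<n. A a b * H b 0))"
      unfolding A'_def by (simp add: sum_distrib_left mult_ac)
    also have "\<dots> = (\<Sum>a<n. H i a * (e * H a 0))"
      by (intro sum.cong refl) (simp add: Hc ue)
    also have "\<dots> = e * (\<Sum>a<n. H i a * H a 0)" by (simp add: sum_distrib_left mult_ac)
    also have "\<dots> = e * (if i = 0 then 1 else 0)" using Hu i by simp
    finally show ?thesis .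
  qed
  have A'h: "herm n A'" unfolding herm_def
  proof (intro allI impI)
    fix i j assume i: "i < n" and j: "j < n"
    have "cnj (A' i j) = (\<Sum>a<n. \<Sum>b<n. H a i * A b a * H j b)"
      unfolding A'_def cnj_sum
      by (intro sum.cong refl) (simp add: hcH hA i j)
    also have "\<dots> = (\<Sum>b<n. \<Sum>a<n. H a i * A b a * H j b)" by (rule sum.swap)
    also have "\<dots> = A' j i" unfolding A'_def by (intro sum.cong refl) (simp add: mult_ac)
    finally show "A' j i = cnj (A' i j)" by simp
  qed
  have e00: "A' 0 0 = e" using A'col[OF n0] by simp
  have ereal: "e = of_real (Re e)"
  proof -
    have "A' 0 0 = cnj (A' 0 0)" using herm_D[OF A'h n0 n0] .
    thus ?thesis using e00 cnj_eq_real by metis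
  qed
  have A'row: "A' 0 j = e * (if j = 0 then 1 else 0)" if j: "j < n" for j
  proof -
    have "A' 0 j = cnj (A' j 0)" using herm_D[OF A'h j n0] .
    also have "\<dots> = cnj e * (if j = 0 then 1 else 0)" using A'col[OF j] by simp
    also have "cnj e = e" using ereal by (metis complex_cnj_complex_of_real)
    finally show ?thesis .
  qed
  define A3 where "A3 = (\<lambda>i j. A' (Suc i) (Suc j))"
  have "herm m A3" unfolding herm_def A3_def
    by (intro allI impI herm_D[OF A'h]) (simp_all add: n_def)
  from Suc.IH[OF this] obtain v mu where vo: "orthon m v" and vc: "complete m v" and vd: "decomp m A3 v mu"
    by blast
  define Y where "Y = (\<lambda>k i. if k = 0 then (if i = 0 then 1 else 0) else (if i = 0 then 0 else v (k - 1) (i - 1)))"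
  define lam where "lam = (\<lambda>k. if k = 0 then Re e else mu (k - 1))"
  have Yo: "orthon n Y" unfolding orthon_def
  proof (intro allI impI)
    fix k l assume k: "k < n" and l: "l < n"
    have "(\<Sum>a<n. cnj (Y k a) * Y l a) = cnj (Y k 0) * Y l 0 + (\<Sum>a<m. cnj (Y k (Suc a)) * Y l (Suc a))"
      unfolding n_def by (rule sum.lessThan_Suc_shift)
    thus "(\<Sum>a<n. cnj (Y k a) * Y l a) = (if k = l then 1 else 0)"
      using k l vo unfolding orthon_def by (cases k; cases l) (auto simp: Y_def n_def)
  qed
  have Yc: "complete n Y" unfolding complete_def
  proof (intro allI impI)
    fix a b assume a: "a < n" and b: "b < n"
    have "(\<Sum>k<n. Y k a * cnj (Y k b)) = Y 0 a * cnj (Y 0 b) + (\<Sum>k<m. Y (Suc k) a * cnj (Y (Suc k) b))"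
      unfolding n_def by (rule sum.lessThan_Suc_shift)
    thus "(\<Sum>k<n. Y k a * cnj (Y k b)) = (if a = b then 1 else 0)"
      using a b vc unfolding complete_def by (cases a; cases b) (auto simp: Y_def n_def)
  qed
  have Yd: "decomp n A' Y lam" unfolding decomp_def
  proof (intro allI impI)
    fix i j assume i: "i < n" and j: "j < n"
    have "(\<Sum>k<n. of_real (lam k) * Y k i * cnj (Y k j)) = of_real (lam 0) * Y 0 i * cnj (Y 0 j)
       + (\<Sum>k<m. of_real (lam (Suc k)) * Y (Suc k) i * cnj (Y (Suc k) j))"
      unfolding n_def by (rule sum.lessThan_Suc_shift)
    moreover have "A' i j = of_real (lam 0) * Y 0 i * cnj (Y 0 j)
       + (\<Sum>k<m. of_real (lam (Suc k)) * Y (Suc k) i * cnj (Y (Suc k) j))"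
    proof (cases i)
      case 0
      then show ?thesis using A'row[OF j] ereal by (cases j) (auto simp: Y_def lam_def)
    next
      case (Suc i')
      show ?thesis
      proof (cases j)
        case 0
        then show ?thesis using A'col[OF i] Suc by (auto simp: Y_def lam_def)
      next
        case (Suc j')
        have "A' i j = A3 i' j'" using \<open>i = Suc i'\<close> Suc by (simp add: A3_def)
        also have "\<dots> = (\<Sum>k<m. of_real (mu k) * v k i' * cnj (v k j'))"
          using vd i j \<open>i = Suc i'\<close> Suc unfolding decomp_def by (auto simp: n_def)
        finally show ?thesis using \<open>i = Suc i'\<close> Suc by (simp add: Y_def lam_def)
      qed
    qed
    ultimately show "A' i j = (\<Sum>k<n. of_real (lam k) * Y k i * cnj (Y k j))" by simp
  qed
  have Hu': "\<And>a c. a < n \<Longrightarrow> c < n \<Longrightarrow> (\<Sum>b<n. H a b * H b c) = (if a = c then 1 else 0)"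
    using Hu by auto
  have A'eq: "\<And>i j. i < n \<Longrightarrow> j < n \<Longrightarrow> A' i j = (\<Sum>a<n. \<Sum>b<n. H i a * A a b * H b j)"
    unfolding A'_def by simp
  from transform[OF Hh Hu' Yo Yc Yd A'eq] show ?case unfolding n_def by blast
qed


lemma charpoly_spec:
  fixes P :: "complex mat"
  assumes P: "P \<in> carrier_mat d d" and o: "orthon d u" and c: "complete d u"
    and dc: "decomp d (\<lambda>a b. P $$ (a,b)) u lam"
  shows "char_poly P = (\<Prod>k\<leftarrow>[0..<d]. [:- of_real (lam k), 1:])"
proof -
  define U where "U = mat d d (\<lambda>(a,k). u k a)"
  define Uh where "Uh = mat d d (\<lambda>(k,a). cnj (u k a))"
  define D where "D = mat d d (\<lambda>(i,j). if i = j then complex_of_real (lam i) else 0)"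
  have UUh: "U * Uh = 1\<^sub>m d"
  proof (rule eq_matI)
    fix a b assume a: "a < dim_row (1\<^sub>m d)" and b: "b < dim_col (1\<^sub>m d)"
    have "(U * Uh) $$ (a, b) = (\<Sum>k<d. u k a * cnj (u k b))"
      using a b by (simp add: U_def Uh_def scalar_prod_def atLeast0LessThan)
    also have "\<dots> = 1\<^sub>m d $$ (a, b)" using c a b unfolding complete_def by simp
    finally show "(U * Uh) $$ (a, b) = 1\<^sub>m d $$ (a, b)" .
  qed (auto simp: U_def Uh_def)
  have UhU: "Uh * U = 1\<^sub>m d"
  proof (rule eq_matI)
    fix a b assume a: "a < dim_row (1\<^sub>m d)" and b: "b < dim_col (1\<^sub>m d)"
    have "(Uh * U) $$ (a, b) = (\<Sum>k<d. cnj (u a k) * u b k)"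
      using a b by (simp add: U_def Uh_def scalar_prod_def atLeast0LessThan)
    also have "\<dots> = 1\<^sub>m d $$ (a, b)" using o a b unfolding orthon_def by simp
    finally show "(Uh * U) $$ (a, b) = 1\<^sub>m d $$ (a, b)" .
  qed (auto simp: U_def Uh_def)
  have UD: "(U * D) $$ (a, k) = u k a * complex_of_real (lam k)" if a: "a < d" and k: "k < d" for a k
  proof -
    have "(U * D) $$ (a, k) = (\<Sum>j<d. u j a * (if j = k then complex_of_real (lam j) else 0))"
      using a k by (simp add: U_def D_def scalar_prod_def atLeast0LessThan)
    also have "\<dots> = (\<Sum>j<d. u j a * complex_of_real (lam j) * (if j = k then 1 else 0))"
      by (intro sum.cong refl) auto
    also have "\<dots> = u k a * complex_of_real (lam k)" using k by simp
    finally show ?thesis .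
  qed
  have PD: "P = U * D * Uh"
  proof (rule eq_matI)
    fix a b assume a: "a < dim_row (U * D * Uh)" and b: "b < dim_col (U * D * Uh)"
    hence a': "a < d" and b': "b < d" by (auto simp: U_def Uh_def)
    have "(U * D * Uh) $$ (a, b) = (\<Sum>k<d. (U * D) $$ (a, k) * cnj (u k b))"
      using a' b' by (simp add: U_def Uh_def D_def scalar_prod_def atLeast0LessThan)
    also have "\<dots> = (\<Sum>k<d. complex_of_real (lam k) * u k a * cnj (u k b))"
      by (intro sum.cong refl) (simp add: UD a' mult_ac)
    also have "\<dots> = P $$ (a, b)" using dc a' b' unfolding decomp_def by simp
    finally show "P $$ (a, b) = (U * D * Uh) $$ (a, b)" by simp
  qed (use P in \<open>auto simp: U_def Uh_def\<close>)
  have "similar_mat_wit P D U Uh" unfolding similar_mat_wit_def Let_def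
    using P UUh UhU PD by (auto simp: U_def Uh_def D_def)
  hence "similar_mat P D" unfolding similar_mat_def by blast
  hence "char_poly P = char_poly D" by (rule char_poly_similar)
  also have "\<dots> = (\<Prod>a\<leftarrow>diag_mat D. [:- a, 1:])"
    by (rule char_poly_upper_triangular[of _ d]) (auto simp: D_def upper_triangular_def)
  also have "diag_mat D = map (\<lambda>k. complex_of_real (lam k)) [0..<d]"
    by (simp add: diag_mat_def D_def)
  finally show ?thesis by (simp add: comp_def)
qed

lemma sum_count_real: "(\<Sum>a\<in>set es. real (count_list es a) * f a) = sum_list (map (f :: 'a \<Rightarrow> real) es)"
proof (induction es)
  case Nil thus ?case by simp
next
  case (Cons x xs)
  have "(\<Sum>a\<in>set (x#xs). real (count_list (x#xs) a) * f a)
      = (\<Sum>a\<in>insert x (set xs). real (count_list xs a) * f a + (if a = x then f a else 0))"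
    by (intro sum.cong) (auto simp: algebra_simps)
  also have "\<dots> = (\<Sum>a\<in>insert x (set xs). real (count_list xs a) * f a) + f x"
    by (simp add: sum.distrib)
  also have "(\<Sum>a\<in>insert x (set xs). real (count_list xs a) * f a) = (\<Sum>a\<in>set xs. real (count_list xs a) * f a)"
    by (cases "x \<in> set xs") (auto simp: sum.insert_if count_list_0_iff)
  finally show ?case using Cons.IH by simp
qed

lemma entropy_spec:
  fixes P :: "complex mat" and lam :: "nat \<Rightarrow> real"
  assumes cp: "char_poly P = (\<Prod>k\<leftarrow>[0..<d]. [:- of_real (lam k), 1:])"
  shows "vn_entropy P = - (\<Sum>k<d. (if lam k = 0 then 0 else lam k * log 2 (lam k)))"
proof -
  define es where "es = map (\<lambda>k. complex_of_real (lam k)) [0..<d]"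
  define f where "f = (\<lambda>a::complex. if Re a = 0 then 0 else Re a * log 2 (Re a))"
  have cp': "char_poly P = (\<Prod>e\<leftarrow>es. [:- e, 1:])" unfolding cp es_def by (simp add: comp_def)
  have roots: "{a. poly (char_poly P) a = 0} = set es"
    unfolding cp' poly_prod_list_zero_iff by (auto simp: comp_def)
  have ord: "order a (char_poly P) = count_list es a" for a
  proof -
    have "order a (char_poly P) = sum_list (map (order a) (map (\<lambda>e. [:- e, 1:]) es))"
      unfolding cp' by (rule order_prod_list) auto
    also have "\<dots> = count_list es a"
      by (induction es) (auto simp: order_linear')
    finally show ?thesis .
  qed
  have "(\<Sum>a\<in>{a. poly (char_poly P) a = 0}. real (order a (char_poly P)) * f a)
      = (\<Sum>a\<in>set es. real (count_list es a) * f a)" unfolding roots ord ..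
  also have "\<dots> = sum_list (map f es)"
    by (rule sum_count_real)
  also have "\<dots> = (\<Sum>k<d. (if lam k = 0 then 0 else lam k * log 2 (lam k)))"
    unfolding es_def f_def
    by (simp add: comp_def sum_list_distinct_conv_sum_set atLeast0LessThan Re_complex_of_real cong: if_cong)
  finally show ?thesis unfolding vn_entropy_def f_def by simp
qed


lemma sum_idx: fixes d D :: nat shows "(\<Sum>a<d*D. f a) = (\<Sum>j<d. \<Sum>k<D. (f (j*D + k) :: 'a::comm_monoid_add))"
proof (induction d)
  case 0 show ?case by simp
next
  case (Suc d)
  have u: "{..<Suc d * D} = {..<d*D} \<union> {d*D..<d*D+D}" by auto
  have "(\<Sum>a<Suc d*D. f a) = (\<Sum>a<d*D. f a) + (\<Sum>a\<in>{d*D..<d*D+D}. f a)"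
    unfolding u by (rule sum.union_disjoint) auto
  also have "(\<Sum>a\<in>{d*D..<d*D+D}. f a) = (\<Sum>k<D. f (d*D + k))"
    by (rule sum.reindex_bij_witness[of _ "\<lambda>k. d*D + k" "\<lambda>a. a - d*D"]) auto
  finally show ?case using Suc.IH by simp
qed

lemma idx_div: "(k::nat) < D \<Longrightarrow> (j*D + k) div D = j" by simp
lemma idx_mod: "(k::nat) < D \<Longrightarrow> (j*D + k) mod D = k" by simp
lemma idx_lt: "(j::nat) < d \<Longrightarrow> k < D \<Longrightarrow> j*D + k < d*D"
proof -
  assume "j < d" "k < D"
  hence "j*D + k < j*D + D" by simp
  also have "\<dots> = (Suc j) * D" by simp
  also have "\<dots> \<le> d * D" using \<open>j < d\<close> by (intro mult_le_mono1) simp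
  finally show ?thesis .
qed


definition B4 :: "nat \<Rightarrow> nat \<Rightarrow> (nat \<Rightarrow> nat \<Rightarrow> nat \<Rightarrow> nat \<Rightarrow> complex) \<Rightarrow> (nat \<Rightarrow> nat \<Rightarrow> complex) \<Rightarrow> (nat \<Rightarrow> nat \<Rightarrow> complex) \<Rightarrow> complex" where
  "B4 d D F x y = (\<Sum>j<d. \<Sum>l<D. \<Sum>j'<d. \<Sum>l'<D. cnj (x j l) * F j l j' l' * y j' l')"

lemma sif1: "(k::nat) < D \<Longrightarrow> (\<Sum>l<D. f l * (if l = k then g l else 0)) = f k * (g k :: complex)"
proof -
  assume k: "k < D"
  have "(\<Sum>l<D. f l * (if l = k then g l else 0)) = (\<Sum>l<D. if l = k then f l * g l else 0)"
    by (intro sum.cong refl) simp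
  thus ?thesis using k by simp
qed
lemma sif2: "(k::nat) < D \<Longrightarrow> (\<Sum>l<D. (if l = k then g l else 0) * f l) = g k * (f k :: complex)"
proof -
  assume k: "k < D"
  have "(\<Sum>l<D. (if l = k then g l else 0) * f l) = (\<Sum>l<D. if l = k then g l * f l else 0)"
    by (intro sum.cong refl) simp
  thus ?thesis using k by simp
qed
lemma cnj_if: "cnj (if P then a else b) = (if P then cnj a else cnj b)" by simp

lemma B4_z:
  assumes c: "c < D" and a: "a < D"
  shows "B4 d D F (\<lambda>j l. if l = a then Z j b else 0) (\<lambda>j l. if l = c then Y j e else 0)
       = (\<Sum>j<d. \<Sum>j'<d. cnj (Z j b) * F j a j' c * Y j' e)"
proof -
  have "B4 d D F (\<lambda>j l. if l = a then Z j b else 0) (\<lambda>j l. if l = c then Y j e else 0)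
     = (\<Sum>j<d. \<Sum>l<D. \<Sum>j'<d. \<Sum>l'<D. ((if l = a then cnj (Z j b) else 0) * F j l j' l') * (if l' = c then Y j' e else 0))"
    unfolding B4_def by (intro sum.cong refl) auto
  also have "\<dots> = (\<Sum>j<d. \<Sum>l<D. \<Sum>j'<d. (if l = a then cnj (Z j b) else 0) * F j l j' c * Y j' e)"
    using c by (intro sum.cong refl) (simp only: sif1)
  also have "\<dots> = (\<Sum>j<d. \<Sum>j'<d. \<Sum>l<D. (if l = a then cnj (Z j b) else 0) * (F j l j' c * Y j' e))"
    by (rule sum.cong[OF refl]) (simp only: mult.assoc, rule sum.swap)
  also have "\<dots> = (\<Sum>j<d. \<Sum>j'<d. cnj (Z j b) * (F j a j' c * Y j' e))"
    using a by (intro sum.cong refl) (simp only: sif2)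
  finally show ?thesis by (simp add: mult.assoc)
qed

lemma B4_diff: "B4 d D F (\<lambda>j l. x j l - y j l) (\<lambda>j l. x j l - y j l)
   = B4 d D F x x - B4 d D F x y - B4 d D F y x + B4 d D F y y"
proof -
  have "B4 d D F (\<lambda>j l. x j l - y j l) (\<lambda>j l. x j l - y j l)
     = (\<Sum>j<d. \<Sum>l<D. \<Sum>j'<d. \<Sum>l'<D. (cnj (x j l) * F j l j' l' * x j' l' - cnj (x j l) * F j l j' l' * y j' l')
          - (cnj (y j l) * F j l j' l' * x j' l' - cnj (y j l) * F j l j' l' * y j' l'))"
    unfolding B4_def by (intro sum.cong refl) (simp add: algebra_simps)
  also have "\<dots> = B4 d D F x x - B4 d D F x y - (B4 d D F y x - B4 d D F y y)"
    unfolding B4_def by (simp only: sum_subtractf)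
  finally show ?thesis by simp
qed

lemma B4_re_cross:
  assumes psd: "\<forall>x. 0 \<le> Re (B4 d D F x x)"
  shows "Re (B4 d D F x y) + Re (B4 d D F y x) \<le> Re (B4 d D F x x) + Re (B4 d D F y y)"
proof -
  have "0 \<le> Re (B4 d D F (\<lambda>j l. x j l - y j l) (\<lambda>j l. x j l - y j l))" using psd by blast
  thus ?thesis unfolding B4_diff by simp
qed

lemma ppt4:
  fixes M4 :: "nat \<Rightarrow> nat \<Rightarrow> nat \<Rightarrow> nat \<Rightarrow> complex"
  assumes psdN: "\<forall>x. 0 \<le> Re (B4 d D (\<lambda>j l j' l'. M4 j l' j' l) x x)"
  shows "Re (B4 d D M4 Z Z) \<le> Re (\<Sum>j<d. \<Sum>j'<d. (\<Sum>k<D. Z j' k * cnj (Z j k)) * (\<Sum>k<D. M4 j k j' k))"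
proof -
  define N where "N = (\<lambda>j l j' l'. M4 j l' j' l)"
  define z where "z = (\<lambda>(k::nat) (k'::nat) (j::nat) (l::nat). if l = k' then Z j k else 0)"
  define R where "R = (\<lambda>k k'. Re (B4 d D N (z k k') (z k' k)))"
  define S where "S = (\<lambda>k k'. Re (B4 d D N (z k k') (z k k')))"
  have "B4 d D M4 Z Z = (\<Sum>j<d. \<Sum>j'<d. \<Sum>k<D. \<Sum>k'<D. cnj (Z j k) * M4 j k j' k' * Z j' k')"
    unfolding B4_def by (rule sum.cong[OF refl]) (rule sum.swap)
  also have "\<dots> = (\<Sum>k<D. \<Sum>k'<D. \<Sum>j<d. \<Sum>j'<d. cnj (Z j k) * M4 j k j' k' * Z j' k')"
    by (rule sum4_rot)
  also have "\<dots> = (\<Sum>k<D. \<Sum>k'<D. B4 d D N (z k k') (z k' k))"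
    by (intro sum.cong refl) (simp add: z_def B4_z N_def)
  finally have L: "Re (B4 d D M4 Z Z) = (\<Sum>k<D. \<Sum>k'<D. R k k')"
    by (simp add: R_def Re_sum)
  have sw: "(\<Sum>k<D. \<Sum>k'<D. R k k') = (\<Sum>k<D. \<Sum>k'<D. R k' k)" by (rule sum.swap)
  have sw2: "(\<Sum>k<D. \<Sum>k'<D. S k' k) = (\<Sum>k<D. \<Sum>k'<D. S k k')" by (rule sum.swap)
  have le: "R k k' + R k' k \<le> S k k' + S k' k" for k k'
    unfolding R_def S_def by (rule B4_re_cross) (use psdN in \<open>simp add: N_def\<close>)
  have "2 * (\<Sum>k<D. \<Sum>k'<D. R k k') = (\<Sum>k<D. \<Sum>k'<D. R k k' + R k' k)"
    using sw by (simp add: sum.distrib)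
  also have "\<dots> \<le> (\<Sum>k<D. \<Sum>k'<D. S k k' + S k' k)"
    by (intro sum_mono le)
  also have "\<dots> = 2 * (\<Sum>k<D. \<Sum>k'<D. S k k')"
    using sw2 by (simp add: sum.distrib)
  finally have RS: "(\<Sum>k<D. \<Sum>k'<D. R k k') \<le> (\<Sum>k<D. \<Sum>k'<D. S k k')" by simp
  have "(\<Sum>k<D. \<Sum>k'<D. B4 d D N (z k k') (z k k')) = (\<Sum>k<D. \<Sum>k'<D. \<Sum>j<d. \<Sum>j'<d. cnj (Z j k) * M4 j k' j' k' * Z j' k)"
    by (intro sum.cong refl) (simp add: z_def B4_z N_def)
  also have "\<dots> = (\<Sum>j<d. \<Sum>j'<d. \<Sum>k<D. \<Sum>k'<D. cnj (Z j k) * M4 j k' j' k' * Z j' k)"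
    by (rule sum4_rot)
  also have "\<dots> = (\<Sum>j<d. \<Sum>j'<d. (\<Sum>k<D. Z j' k * cnj (Z j k)) * (\<Sum>k<D. M4 j k j' k))"
    by (rule sum.cong[OF refl], rule sum.cong[OF refl], unfold sum_product, intro sum.cong refl, simp add: mult_ac)
  finally have E: "(\<Sum>k<D. \<Sum>k'<D. B4 d D N (z k k') (z k k')) = (\<Sum>j<d. \<Sum>j'<d. (\<Sum>k<D. Z j' k * cnj (Z j k)) * (\<Sum>k<D. M4 j k j' k))" .
  have "(\<Sum>k<D. \<Sum>k'<D. S k k') = Re (\<Sum>k<D. \<Sum>k'<D. B4 d D N (z k k') (z k k'))"
    by (simp only: S_def Re_sum)
  also have "\<dots> = Re (\<Sum>j<d. \<Sum>j'<d. (\<Sum>k<D. Z j' k * cnj (Z j k)) * (\<Sum>k<D. M4 j k j' k))"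
    by (simp only: E)
  finally have "(\<Sum>k<D. \<Sum>k'<D. S k k') = Re (\<Sum>j<d. \<Sum>j'<d. (\<Sum>k<D. Z j' k * cnj (Z j k)) * (\<Sum>k<D. M4 j k j' k))" .
  with L RS show ?thesis by simp
qed


definition FX :: "nat \<Rightarrow> (nat \<Rightarrow> nat \<Rightarrow> complex) \<Rightarrow> (nat \<Rightarrow> real) \<Rightarrow> (nat \<Rightarrow> nat \<Rightarrow> complex) \<Rightarrow> nat \<Rightarrow> nat \<Rightarrow> complex" where
  "FX d u f X j k = (\<Sum>j'<d. (\<Sum>m<d. of_real (f m) * u m j * cnj (u m j')) * X j' k)"

lemma Fu:
  assumes o: "orthon d u" and l: "l < d"
  shows "(\<Sum>a<d. (\<Sum>m<d. of_real (f m) * u m j * cnj (u m a)) * u l a) = of_real (f l) * u l j"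
proof -
  have "(\<Sum>a<d. (\<Sum>m<d. of_real (f m) * u m j * cnj (u m a)) * u l a)
      = (\<Sum>m<d. of_real (f m) * u m j * (\<Sum>a<d. cnj (u m a) * u l a))"
    by (simp add: sum_distrib_left sum_distrib_right mult_ac) (rule sum.swap)
  also have "\<dots> = (\<Sum>m<d. of_real (f m) * u m j * (if m = l then 1 else 0))"
    using o l unfolding orthon_def by (intro sum.cong refl) auto
  also have "\<dots> = of_real (f l) * u l j" using l by simp
  finally show ?thesis .
qed

lemma sum_prod3': "(\<Sum>i\<in>I. \<Sum>j\<in>J. c * f i * g j) = c * (\<Sum>i\<in>I. f i) * (\<Sum>j\<in>J. (g j::complex))"
proof -
  have "c * (\<Sum>i\<in>I. f i) * (\<Sum>j\<in>J. g j) = (\<Sum>i\<in>I. c * f i) * (\<Sum>j\<in>J. g j)"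
    by (subst sum_distrib_left) (rule refl)
  also have "\<dots> = (\<Sum>i\<in>I. \<Sum>j\<in>J. c * f i * g j)" by (rule sum_product)
  finally show ?thesis by simp
qed

lemma E1:
  assumes o: "orthon d u" and dc: "decomp d (\<lambda>a b. \<Sum>k<D. X a k * cnj (X b k)) u lam"
    and j: "j < d" and j': "j' < d"
  shows "(\<Sum>k<D. FX d u f X j k * cnj (FX d u g X j' k))
       = (\<Sum>l<d. of_real (f l * g l * lam l) * u l j * cnj (u l j'))"
proof -
  define F where "F = (\<lambda>a. \<Sum>m<d. of_real (f m) * u m j * cnj (u m a))"
  define G where "G = (\<lambda>b. \<Sum>m<d. of_real (g m) * u m j' * cnj (u m b))"
  have "(\<Sum>k<D. FX d u f X j k * cnj (FX d u g X j' k))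
      = (\<Sum>k<D. \<Sum>a<d. \<Sum>b<d. F a * cnj (G b) * (X a k * cnj (X b k)))"
    unfolding FX_def cnj_sum sum_product
    by (intro sum.cong refl) (simp add: F_def G_def cnj_sum mult_ac)
  also have "\<dots> = (\<Sum>a<d. \<Sum>b<d. F a * cnj (G b) * (\<Sum>k<D. X a k * cnj (X b k)))"
    by (subst sum3_rot) (simp only: sum_distrib_left)
  also have "\<dots> = (\<Sum>a<d. \<Sum>b<d. \<Sum>l<d. of_real (lam l) * (F a * u l a) * cnj (G b * u l b))"
    using dc unfolding decomp_def
    by (intro sum.cong refl) (simp add: sum_distrib_left mult_ac)
  also have "\<dots> = (\<Sum>l<d. \<Sum>a<d. \<Sum>b<d. of_real (lam l) * (F a * u l a) * cnj (G b * u l b))"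
    by (subst sum3_rot, subst sum3_rot, rule refl)
  also have "\<dots> = (\<Sum>l<d. of_real (lam l) * (\<Sum>a<d. F a * u l a) * cnj (\<Sum>b<d. G b * u l b))"
    unfolding cnj_sum by (intro sum.cong refl) (rule sum_prod3')
  also have "\<dots> = (\<Sum>l<d. of_real (lam l) * (of_real (f l) * u l j) * cnj (of_real (g l) * u l j'))"
    unfolding F_def G_def using Fu[OF o] by (intro sum.cong refl) simp
  also have "\<dots> = (\<Sum>l<d. of_real (f l * g l * lam l) * u l j * cnj (u l j'))"
    by (intro sum.cong refl) (simp add: mult_ac)
  finally show ?thesis .
qed


lemma FX_one:
  assumes c: "complete d u" and j: "j < d"
  shows "FX d u (\<lambda>_. 1) X j k = X j k"
proof -
  have "FX d u (\<lambda>_. 1) X j k = (\<Sum>j'<d. (if j = j' then 1 else 0) * X j' k)"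
    unfolding FX_def using c j unfolding complete_def by (intro sum.cong refl) auto
  also have "\<dots> = X j k" using j by simp
  finally show ?thesis .
qed

lemma FX_add: "FX d u f X j k + FX d u g X j k = FX d u (\<lambda>m. f m + g m) X j k"
proof -
  have "FX d u f X j k + FX d u g X j k
      = (\<Sum>j'<d. (\<Sum>m<d. of_real (f m) * u m j * cnj (u m j')) * X j' k + (\<Sum>m<d. of_real (g m) * u m j * cnj (u m j')) * X j' k)"
    unfolding FX_def by (simp only: sum.distrib)
  also have "\<dots> = FX d u (\<lambda>m. f m + g m) X j k"
    unfolding FX_def by (intro sum.cong refl) (simp add: sum.distrib distrib_left distrib_right)
  finally show ?thesis .
qed

lemma E4:
  fixes X :: "nat \<Rightarrow> nat \<Rightarrow> complex"
  assumes o: "orthon d u" and dc: "decomp d (\<lambda>a b. \<Sum>k<D. X a k * cnj (X b k)) u lam"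
  shows "(\<Sum>j<d. \<Sum>k<D. FX d u f X j k * cnj (FX d u f X j k)) = of_real (\<Sum>m<d. f m * f m * lam m)"
proof -
  have "(\<Sum>j<d. \<Sum>k<D. FX d u f X j k * cnj (FX d u f X j k))
      = (\<Sum>j<d. \<Sum>l<d. of_real (f l * f l * lam l) * (cnj (u l j) * u l j))"
    by (rule sum.cong[OF refl]) (simp add: E1[OF o dc] mult_ac)
  also have "\<dots> = (\<Sum>l<d. of_real (f l * f l * lam l) * (\<Sum>j<d. cnj (u l j) * u l j))"
    by (subst sum.swap) (simp only: sum_distrib_left)
  also have "\<dots> = (\<Sum>l<d. of_real (f l * f l * lam l))"
    using o unfolding orthon_def by (intro sum.cong refl) simp
  finally show ?thesis by (simp add: of_real_sum)
qed

lemma re_sq_nonneg: "0 \<le> Re (z * cnj z)"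
  by (simp add: complex_mult_cnj)

lemma lam_nonneg:
  fixes X :: "nat \<Rightarrow> nat \<Rightarrow> complex"
  assumes o: "orthon d u" and dc: "decomp d (\<lambda>a b. \<Sum>k<D. X a k * cnj (X b k)) u lam" and m: "m < d"
  shows "0 \<le> lam m"
proof -
  define f where "f = (\<lambda>l::nat. if l = m then (1::real) else 0)"
  have "(\<Sum>l<d. f l * f l * lam l) = (\<Sum>l<d. if l = m then lam l else 0)"
    unfolding f_def by (intro sum.cong refl) auto
  also have "\<dots> = lam m" using m by simp
  finally have "lam m = Re (\<Sum>j<d. \<Sum>k<D. FX d u f X j k * cnj (FX d u f X j k))"
    unfolding E4[OF o dc] by simp
  also have "\<dots> \<ge> 0" unfolding Re_sum by (intro sum_nonneg re_sq_nonneg)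
  finally show ?thesis .
qed

lemma lam_sum:
  fixes X :: "nat \<Rightarrow> nat \<Rightarrow> complex"
  assumes o: "orthon d u" and c: "complete d u" and dc: "decomp d (\<lambda>a b. \<Sum>k<D. X a k * cnj (X b k)) u lam"
    and n1: "(\<Sum>j<d. \<Sum>k<D. X j k * cnj (X j k)) = 1"
  shows "(\<Sum>m<d. lam m) = 1"
proof -
  have "(\<Sum>j<d. \<Sum>k<D. FX d u (\<lambda>_. 1) X j k * cnj (FX d u (\<lambda>_. 1) X j k)) = 1"
    using n1 FX_one[OF c] by simp
  hence "complex_of_real (\<Sum>m<d. lam m) = 1" unfolding E4[OF o dc] by simp
  thus ?thesis by (metis of_real_eq_1_iff)
qed


lemma q_nonneg:
  fixes M4 :: "nat \<Rightarrow> nat \<Rightarrow> nat \<Rightarrow> nat \<Rightarrow> complex" and v :: "nat \<Rightarrow> complex"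
  assumes Mpsd: "\<forall>x. 0 \<le> Re (B4 d D M4 x x)"
  shows "0 \<le> Re (\<Sum>j<d. \<Sum>j'<d. cnj (v j) * (\<Sum>k<D. M4 j k j' k) * v j')"
proof -
  have "(\<Sum>j<d. \<Sum>j'<d. cnj (v j) * (\<Sum>k<D. M4 j k j' k) * v j')
      = (\<Sum>j<d. \<Sum>j'<d. \<Sum>k<D. cnj (v j) * M4 j k j' k * v j')"
    by (intro sum.cong refl) (simp add: sum_distrib_left sum_distrib_right)
  also have "\<dots> = (\<Sum>k<D. \<Sum>j<d. \<Sum>j'<d. cnj (v j) * M4 j k j' k * v j')"
    by (rule sum3_rot[symmetric])
  also have "\<dots> = (\<Sum>k<D. B4 d D M4 (\<lambda>j l. if l = k then v j else 0) (\<lambda>j l. if l = k then v j else 0))"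
    by (intro sum.cong refl) (simp add: B4_z[where Z="\<lambda>j b. v j" and Y="\<lambda>j b. v j", simplified])
  finally show ?thesis using Mpsd by (simp add: Re_sum sum_nonneg)
qed

lemma ppt_spec:
  fixes M4 :: "nat \<Rightarrow> nat \<Rightarrow> nat \<Rightarrow> nat \<Rightarrow> complex" and X :: "nat \<Rightarrow> nat \<Rightarrow> complex"
  assumes o: "orthon d u" and c: "complete d u"
    and dc: "decomp d (\<lambda>a b. \<Sum>k<D. X a k * cnj (X b k)) u lam"
    and PPT: "\<forall>x. 0 \<le> Re (B4 d D (\<lambda>j l j' l'. M4 j l' j' l) x x)"
    and Mpsd: "\<forall>x. 0 \<le> Re (B4 d D M4 x x)"
    and t: "\<And>m. m < d \<Longrightarrow> f m * f m * lam m \<le> cc"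
    and t0: "\<And>m. m < d \<Longrightarrow> 0 \<le> f m * f m * lam m"
  shows "Re (B4 d D M4 (FX d u f X) (FX d u f X)) \<le> cc * Re (\<Sum>j<d. \<Sum>k<D. M4 j k j k)"
proof -
  define Y where "Y = FX d u f X"
  define MB where "MB = (\<lambda>j j'. \<Sum>k<D. M4 j k j' k)"
  define q where "q = (\<lambda>l. \<Sum>j<d. \<Sum>j'<d. cnj (u l j) * MB j j' * u l j')"
  define tt where "tt = (\<lambda>l. f l * f l * lam l)"
  have "Re (B4 d D M4 Y Y) \<le> Re (\<Sum>j<d. \<Sum>j'<d. (\<Sum>k<D. Y j' k * cnj (Y j k)) * MB j j')"
    unfolding MB_def by (rule ppt4[OF PPT])
  also have "(\<Sum>j<d. \<Sum>j'<d. (\<Sum>k<D. Y j' k * cnj (Y j k)) * MB j j')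
     = (\<Sum>j<d. \<Sum>j'<d. \<Sum>l<d. of_real (tt l) * (cnj (u l j) * MB j j' * u l j'))"
    unfolding Y_def tt_def
    by (intro sum.cong refl) (simp add: E1[OF o dc] sum_distrib_left sum_distrib_right mult_ac)
  also have "\<dots> = (\<Sum>l<d. of_real (tt l) * q l)"
    unfolding q_def by (subst sum3_rot[symmetric]) (simp only: sum_distrib_left)
  finally have A: "Re (B4 d D M4 Y Y) \<le> (\<Sum>l<d. tt l * Re (q l))" by (simp add: Re_sum)
  have qn: "0 \<le> Re (q l)" for l unfolding q_def MB_def by (rule q_nonneg[OF Mpsd])
  have "(\<Sum>l<d. tt l * Re (q l)) \<le> (\<Sum>l<d. cc * Re (q l))"
    by (intro sum_mono mult_right_mono) (auto simp: tt_def t qn)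
  also have "(\<Sum>l<d. cc * Re (q l)) = cc * Re (\<Sum>l<d. q l)" by (simp add: sum_distrib_left Re_sum)
  also have "(\<Sum>l<d. q l) = (\<Sum>j<d. \<Sum>j'<d. (\<Sum>l<d. u l j' * cnj (u l j)) * MB j j')"
    unfolding q_def by (subst sum3_rot) (simp add: sum_distrib_left sum_distrib_right mult_ac)
  also have "\<dots> = (\<Sum>j<d. \<Sum>j'<d. (if j' = j then 1 else 0) * MB j j')"
    using c unfolding complete_def by (intro sum.cong refl) simp
  also have "\<dots> = (\<Sum>j<d. MB j j)" by (intro sum.cong refl) simp
  finally show ?thesis using A unfolding Y_def MB_def by simp
qed


lemma B4_cong:
  assumes "\<And>j l. j < d \<Longrightarrow> l < D \<Longrightarrow> x j l = x' j l" "\<And>j l. j < d \<Longrightarrow> l < D \<Longrightarrow> y j l = y' j l"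
  shows "B4 d D F x y = B4 d D F x' y'"
  unfolding B4_def using assms by (intro sum.cong refl) auto

lemma B4_add: "B4 d D F (\<lambda>j l. x j l + y j l) (\<lambda>j l. x j l + y j l)
   = B4 d D F x x + B4 d D F x y + B4 d D F y x + B4 d D F y y"
proof -
  have "B4 d D F (\<lambda>j l. x j l + y j l) (\<lambda>j l. x j l + y j l)
     = (\<Sum>j<d. \<Sum>l<D. \<Sum>j'<d. \<Sum>l'<D. (cnj (x j l) * F j l j' l' * x j' l' + cnj (x j l) * F j l j' l' * y j' l')
          + (cnj (y j l) * F j l j' l' * x j' l' + cnj (y j l) * F j l j' l' * y j' l'))"
    unfolding B4_def by (intro sum.cong refl) (simp add: algebra_simps)
  also have "\<dots> = B4 d D F x x + B4 d D F x y + (B4 d D F y x + B4 d D F y y)"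
    unfolding B4_def by (simp only: sum.distrib)
  finally show ?thesis by simp
qed

lemma B4_scale: "B4 d D F (\<lambda>j l. complex_of_real a * x j l - y j l) (\<lambda>j l. complex_of_real a * x j l - y j l)
   = complex_of_real (a*a) * B4 d D F x x - complex_of_real a * B4 d D F x y - complex_of_real a * B4 d D F y x + B4 d D F y y"
proof -
  have "B4 d D F (\<lambda>j l. complex_of_real a * x j l - y j l) (\<lambda>j l. complex_of_real a * x j l - y j l)
     = (\<Sum>j<d. \<Sum>l<D. \<Sum>j'<d. \<Sum>l'<D. (complex_of_real (a*a) * (cnj (x j l) * F j l j' l' * x j' l') - complex_of_real a * (cnj (x j l) * F j l j' l' * y j' l'))
          - (complex_of_real a * (cnj (y j l) * F j l j' l' * x j' l') - cnj (y j l) * F j l j' l' * y j' l'))"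
    unfolding B4_def by (intro sum.cong refl) (simp add: algebra_simps)
  also have "\<dots> = complex_of_real (a*a) * B4 d D F x x - complex_of_real a * B4 d D F x y - (complex_of_real a * B4 d D F y x - B4 d D F y y)"
    unfolding B4_def by (simp only: sum_subtractf sum_distrib_left)
  finally show ?thesis by simp
qed

lemma B4_cross:
  assumes psd: "\<forall>x. 0 \<le> Re (B4 d D F x x)" and t: "t > 0"
  shows "Re (B4 d D F x y) + Re (B4 d D F y x) \<le> t * Re (B4 d D F x x) + Re (B4 d D F y y) / t"
proof -
  have "0 \<le> Re (B4 d D F (\<lambda>j l. complex_of_real t * x j l - y j l) (\<lambda>j l. complex_of_real t * x j l - y j l))"
    using psd by blast
  hence "0 \<le> t*t * Re (B4 d D F x x) - t * Re (B4 d D F x y) - t * Re (B4 d D F y x) + Re (B4 d D F y y)"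
    unfolding B4_scale by simp
  hence "t * (Re (B4 d D F x y) + Re (B4 d D F y x)) \<le> t * (t * Re (B4 d D F x x) + Re (B4 d D F y y) / t)"
    using t by (simp add: algebra_simps)
  thus ?thesis using t by simp
qed


lemma clip_bound:
  fixes lam cc :: real
  assumes l0: "0 \<le> lam" and c0: "0 < cc"
  shows "(1 - (if lam \<le> cc then 1 else sqrt (cc / lam)))^2 * lam
         \<le> (if lam = 0 then 0 else lam * ln lam) - lam * ln cc - lam + cc"
proof (cases "lam \<le> cc")
  case True
  show ?thesis
  proof (cases "lam = 0")
    case True thus ?thesis using c0 by simp
  next
    case False
    hence lp: "0 < lam" using l0 by simp
    have "ln (cc / lam) \<le> cc / lam - 1" using c0 lp by (intro ln_le_minus_one) simp
    hence "ln cc - ln lam \<le> cc / lam - 1" using c0 lp by (simp add: ln_div)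
    hence "lam * (ln cc - ln lam) \<le> lam * (cc / lam - 1)" using lp by (intro mult_left_mono) auto
    hence "lam * ln cc - lam * ln lam \<le> cc - lam" using lp by (simp add: algebra_simps)
    thus ?thesis using True False by simp
  qed
next
  case False
  hence lp: "0 < lam" and lc: "cc < lam" using c0 by auto
  define y where "y = sqrt (lam / cc)"
  have yp: "0 < y" unfolding y_def using lp c0 by simp
  have y2: "y * y = lam / cc" unfolding y_def using lp c0 by simp
  have s: "sqrt (cc / lam) = 1 / y" unfolding y_def using lp c0 by (simp add: real_sqrt_divide)
  have "ln (1 / y) \<le> 1 / y - 1" using yp by (intro ln_le_minus_one) simp
  hence ly: "1 - 1 / y \<le> ln y" using yp by (simp add: ln_div)
  have "ln lam - ln cc = ln (lam / cc)" using lp c0 by (simp add: ln_div)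
  also have "\<dots> = ln (y * y)" using y2 by simp
  also have "\<dots> = 2 * ln y" using yp by (simp add: ln_mult)
  finally have lnd: "ln lam - ln cc = 2 * ln y" .
  have lhs: "(1 - 1 / y)^2 * lam = lam - 2 * (lam / y) + cc"
  proof -
    have "(1 - 1 / y)^2 * lam = lam - 2 * (lam / y) + lam / (y * y)"
      using yp by (simp add: power2_eq_square field_simps)
    also have "lam / (y * y) = cc" using y2 c0 lp yp by simp
    finally show ?thesis .
  qed
  have "lam * (2 * (1 - 1 / y)) \<le> lam * (2 * ln y)" using ly lp by simp
  hence "2 * lam - 2 * (lam / y) \<le> lam * (ln lam - ln cc)" unfolding lnd by (simp add: algebra_simps)
  thus ?thesis using False lp s lhs by (simp add: algebra_simps)
qed


lemma per_state4:
  fixes M4 :: "nat \<Rightarrow> nat \<Rightarrow> nat \<Rightarrow> nat \<Rightarrow> complex" and X :: "nat \<Rightarrow> nat \<Rightarrow> complex"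
    and lam :: "nat \<Rightarrow> real" and \<delta> :: real
  assumes d0: "0 < d"
    and o: "orthon d u" and c: "complete d u"
    and dc: "decomp d (\<lambda>a b. \<Sum>k<D. X a k * cnj (X b k)) u lam"
    and n1: "(\<Sum>j<d. \<Sum>k<D. X j k * cnj (X j k)) = 1"
    and PPT: "\<forall>x. 0 \<le> Re (B4 d D (\<lambda>j l j' l'. M4 j l' j' l) x x)"
    and Mpsd: "\<forall>x. 0 \<le> Re (B4 d D M4 x x)"
    and Mle: "\<forall>x. Re (B4 d D M4 x x) \<le> Re (\<Sum>j<d. \<Sum>k<D. x j k * cnj (x j k))"
    and ent: "log 2 (real d) - \<delta> \<le> - (\<Sum>m<d. (if lam m = 0 then 0 else lam m * log 2 (lam m)))"
  shows "\<exists>r. 0 \<le> r \<and> r^2 \<le> \<delta> * ln 2 \<and>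
     Re (B4 d D M4 X X) \<le> Re (\<Sum>j<d. \<Sum>k<D. M4 j k j k) / real d + 2*r + r^2 - r^3"
proof -
  define cc where "cc = 1 / real d"
  have cc0: "0 < cc" unfolding cc_def using d0 by simp
  define s where "s = (\<lambda>m. if lam m \<le> cc then 1 else sqrt (cc / lam m))"
  define s' where "s' = (\<lambda>m. 1 - s m)"
  have lam0: "0 \<le> lam m" if "m < d" for m by (rule lam_nonneg[OF o dc that])
  have lsum: "(\<Sum>m<d. lam m) = 1" by (rule lam_sum[OF o c dc n1])
  have s01: "0 \<le> s m \<and> s m \<le> 1" if m: "m < d" for m
  proof (cases "lam m \<le> cc")
    case True thus ?thesis by (simp add: s_def)
  next
    case False
    hence "cc / lam m \<le> 1" using cc0 by simp
    thus ?thesis using False cc0 by (simp add: s_def)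
  qed
  have tb: "s m * s m * lam m \<le> cc" if m: "m < d" for m
  proof (cases "lam m \<le> cc")
    case True thus ?thesis by (simp add: s_def)
  next
    case False
    hence lp: "0 < lam m" using cc0 by simp
    have "s m * s m = cc / lam m" using False lp cc0 by (simp add: s_def)
    thus ?thesis using lp by simp
  qed
  have t0: "0 \<le> s m * s m * lam m" if m: "m < d" for m using lam0[OF m] by simp
  define X1 where "X1 = FX d u s X"
  define X2 where "X2 = FX d u s' X"
  have Xs: "X j k = X1 j k + X2 j k" if j: "j < d" for j k
  proof -
    have "X1 j k + X2 j k = FX d u (\<lambda>m. s m + s' m) X j k" unfolding X1_def X2_def by (rule FX_add)
    also have "(\<lambda>m. s m + s' m) = (\<lambda>_. 1)" unfolding s'_def by simp
    also have "FX d u (\<lambda>_. 1) X j k = X j k" by (rule FX_one[OF c j])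
    finally show ?thesis by simp
  qed
  define a2 where "a2 = (\<Sum>m<d. s m * s m * lam m)"
  define r2 where "r2 = (\<Sum>m<d. s' m * s' m * lam m)"
  define trM where "trM = Re (\<Sum>j<d. \<Sum>k<D. M4 j k j k)"
  define B11 where "B11 = Re (B4 d D M4 X1 X1)"
  define B22 where "B22 = Re (B4 d D M4 X2 X2)"
  have B11tr: "B11 \<le> cc * trM" unfolding B11_def trM_def X1_def
    by (rule ppt_spec[OF o c dc PPT Mpsd tb t0])
  have B11a: "B11 \<le> a2"
  proof -
    have "B11 \<le> Re (\<Sum>j<d. \<Sum>k<D. X1 j k * cnj (X1 j k))" unfolding B11_def using Mle by blast
    also have "\<dots> = a2" unfolding X1_def E4[OF o dc] a2_def by simp
    finally show ?thesis .
  qed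
  have B22r: "B22 \<le> r2"
  proof -
    have "B22 \<le> Re (\<Sum>j<d. \<Sum>k<D. X2 j k * cnj (X2 j k))" unfolding B22_def using Mle by blast
    also have "\<dots> = r2" unfolding X2_def E4[OF o dc] r2_def by simp
    finally show ?thesis .
  qed
  have BXX: "Re (B4 d D M4 X X) = B11 + B22 + (Re (B4 d D M4 X1 X2) + Re (B4 d D M4 X2 X1))"
  proof -
    have "B4 d D M4 X X = B4 d D M4 (\<lambda>j l. X1 j l + X2 j l) (\<lambda>j l. X1 j l + X2 j l)"
      by (rule B4_cong) (simp_all add: Xs)
    thus ?thesis unfolding B4_add B11_def B22_def by simp
  qed
  have main: "Re (B4 d D M4 X X) \<le> cc * trM + t * a2 + r2 + r2 / t" if t: "t > 0" for t
  proof -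
    have "Re (B4 d D M4 X1 X2) + Re (B4 d D M4 X2 X1) \<le> t * B11 + B22 / t"
      unfolding B11_def B22_def by (rule B4_cross[OF Mpsd t])
    moreover have "t * B11 \<le> t * a2" using B11a t by simp
    moreover have "B22 / t \<le> r2 / t" using B22r t by (simp add: divide_right_mono)
    ultimately show ?thesis using BXX B11tr B22r by simp
  qed
  have ar: "a2 + r2 \<le> 1"
  proof -
    have "a2 + r2 = (\<Sum>m<d. (s m * s m + s' m * s' m) * lam m)"
      unfolding a2_def r2_def by (simp add: sum.distrib[symmetric] algebra_simps)
    also have "\<dots> \<le> (\<Sum>m<d. lam m)"
    proof (rule sum_mono)
      fix m assume "m \<in> {..<d}"
      hence m: "m < d" by simp
      have "s m * s m + s' m * s' m \<le> 1" using s01[OF m] unfolding s'_def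
        by (simp add: algebra_simps) (metis mult_left_le_one_le mult.commute le_diff_eq add.commute)
      thus "(s m * s m + s' m * s' m) * lam m \<le> lam m" using lam0[OF m] by (simp add: mult_left_le_one_le)
    qed
    finally show ?thesis using lsum by simp
  qed
  have r20: "0 \<le> r2" unfolding r2_def using lam0 by (intro sum_nonneg) simp
  have a20: "0 \<le> a2" unfolding a2_def using lam0 by (intro sum_nonneg) simp
  have r2d: "r2 \<le> \<delta> * ln 2"
  proof -
    define lnt where "lnt = (\<lambda>x::real. if x = 0 then 0 else x * ln x)"
    have "r2 \<le> (\<Sum>m<d. lnt (lam m) - lam m * ln cc - lam m + cc)"
      unfolding r2_def s'_def
    proof (rule sum_mono)
      fix m assume "m \<in> {..<d}"
      hence m: "m < d" by simp
      have "(1 - s m) * (1 - s m) * lam m = (1 - s m)^2 * lam m" by (simp add: power2_eq_square)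
      also have "\<dots> \<le> lnt (lam m) - lam m * ln cc - lam m + cc"
        unfolding s_def lnt_def by (rule clip_bound[OF lam0[OF m] cc0])
      finally show "(1 - s m) * (1 - s m) * lam m \<le> lnt (lam m) - lam m * ln cc - lam m + cc" .
    qed
    also have "(\<Sum>m<d. lnt (lam m) - lam m * ln cc - lam m + cc) = (\<Sum>m<d. lnt (lam m)) - ln cc * (\<Sum>m<d. lam m) - (\<Sum>m<d. lam m) + real d * cc"
      by (simp add: sum.distrib sum_subtractf sum_distrib_left mult.commute)
    also have "\<dots> = (\<Sum>m<d. lnt (lam m)) + ln (real d)"
      using lsum d0 by (simp add: cc_def ln_div)
    also have "(\<Sum>m<d. lnt (lam m)) = ln 2 * (\<Sum>m<d. (if lam m = 0 then 0 else lam m * log 2 (lam m)))"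
      unfolding lnt_def sum_distrib_left by (intro sum.cong refl) (simp add: log_def)
    also have "ln 2 * (\<Sum>m<d. (if lam m = 0 then 0 else lam m * log 2 (lam m))) \<le> ln 2 * (\<delta> - log 2 (real d))"
      using ent by (intro mult_left_mono) auto
    also have "ln 2 * (\<delta> - log 2 (real d)) + ln (real d) = \<delta> * ln 2"
      by (simp add: log_def algebra_simps)
    finally show ?thesis by simp
  qed
  show ?thesis
  proof (cases "r2 = 0")
    case True
    have "Re (B4 d D M4 X X) \<le> cc * trM"
    proof (rule field_le_epsilon)
      fix e :: real assume e: "0 < e"
      have "Re (B4 d D M4 X X) \<le> cc * trM + e * a2" using main[OF e] True by simp
      also have "e * a2 \<le> e" using ar True e by (simp add: mult_left_le_one_le)
      finally show "Re (B4 d D M4 X X) \<le> cc * trM + e" by simp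
    qed
    hence "Re (B4 d D M4 X X) \<le> trM / real d" by (simp add: cc_def)
    thus ?thesis using True r2d unfolding trM_def by (intro exI[of _ 0]) simp
  next
    case False
    define r where "r = sqrt r2"
    have rp: "0 < r" unfolding r_def using r20 False by simp
    have rr: "r^2 = r2" unfolding r_def using r20 by simp
    have "Re (B4 d D M4 X X) \<le> cc * trM + r * a2 + r2 + r2 / r" by (rule main[OF rp])
    also have "r * a2 \<le> r * (1 - r2)" using ar rp by simp
    also have "r2 / r = r"
    proof -
      have "r2 = r * r" using rr by (simp add: power2_eq_square)
      thus ?thesis using rp by simp
    qed
    finally have "Re (B4 d D M4 X X) \<le> cc * trM + 2 * r + r^2 - r^3"
      using rr by (simp add: algebra_simps power2_eq_square power3_eq_cube)
    thus ?thesis using rp rr r2d unfolding trM_def cc_def by (intro exI[of _ r]) simp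
  qed
qed


lemma ln2_bound: "ln (2::real) \<le> 64/81"
proof -
  have "(2::real) \<le> (119/100)^4" by (simp add: power4_eq_xxxx)
  hence "ln (2::real) \<le> ln ((119/100)^4)" by (subst ln_le_cancel_iff) auto
  also have "\<dots> = 4 * ln (119/100::real)" by (simp add: ln_realpow)
  also have "ln (119/100::real) \<le> 119/100 - 1" by (rule ln_le_minus_one) simp
  finally show ?thesis by simp
qed

lemma numeric:
  fixes \<delta> \<epsilon> r :: real
  assumes d0: "0 \<le> \<delta>" and e0: "0 \<le> \<epsilon>" and h: "\<epsilon> + sqrt 2 * \<delta> powr (1/4) < 1"
    and r0: "0 \<le> r" and r2: "r^2 \<le> \<delta> * ln 2"
  shows "2*r + r^2 - r^3 \<le> sqrt 2 * \<delta> powr (1/4)"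
proof -
  define \<rho> where "\<rho> = \<delta> powr (1/4)"
  have \<rho>0: "0 \<le> \<rho>" unfolding \<rho>_def by simp
  have \<rho>4: "\<rho>^4 = \<delta>"
  proof (cases "\<delta> = 0")
    case True thus ?thesis by (simp add: \<rho>_def)
  next
    case False
    have "\<rho>^4 = \<delta> powr (of_nat 4 * (1/4))" unfolding \<rho>_def by (rule powr_power[OF False])
    also have "of_nat 4 * (1/4) = (1::real)" by simp
    also have "\<delta> powr 1 = \<delta>" using d0 by simp
    finally show ?thesis .
  qed
  have s1: "sqrt 2 * \<rho> \<le> 1" using h e0 unfolding \<rho>_def by linarith
  have "r^2 \<le> (64/81) * \<rho>^4"
  proof -
    have "\<delta> * ln 2 \<le> \<delta> * (64/81)" by (rule mult_left_mono[OF ln2_bound d0])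
    thus ?thesis using r2 \<rho>4 by simp
  qed
  also have "\<dots> = ((8/9) * \<rho>^2)^2"
  proof -
    have "((8/9) * \<rho>^2)^2 = (8/9)^2 * (\<rho>^2)^2" by (rule power_mult_distrib)
    also have "(\<rho>^2)^2 = \<rho>^4" by (simp flip: power_mult)
    finally show ?thesis by (simp add: power2_eq_square)
  qed
  finally have "r^2 \<le> ((8/9) * \<rho>^2)^2" .
  hence rb: "r \<le> (8/9) * \<rho>^2" by (rule power2_le_imp_le) (use \<rho>0 in simp)
  have "2*r + r^2 - r^3 = r * (2 + r - r^2)" by (simp add: algebra_simps power2_eq_square power3_eq_cube)
  also have "\<dots> \<le> r * (9/4)"
  proof -
    have "0 \<le> (r - 1/2)^2" by simp
    hence "2 + r - r^2 \<le> 9/4" by (simp add: power2_eq_square algebra_simps)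
    thus ?thesis using r0 by (intro mult_left_mono) auto
  qed
  also have "\<dots> \<le> 2 * \<rho>^2" using rb by simp
  also have "2 * \<rho>^2 = (sqrt 2 * \<rho>) * (sqrt 2 * \<rho>)" by (simp add: power2_eq_square algebra_simps)
  also have "\<dots> \<le> 1 * (sqrt 2 * \<rho>)" using s1 \<rho>0 by (intro mult_right_mono) auto
  finally show ?thesis unfolding \<rho>_def by simp
qed


lemma QF_B4:
  fixes d D :: nat
  shows "(\<Sum>a<d*D. \<Sum>b<d*D. cnj (g a) * Mf a b * g b)
       = B4 d D (\<lambda>j l j' l'. Mf (j*D+l) (j'*D+l')) (\<lambda>j k. g (j*D+k)) (\<lambda>j k. g (j*D+k))"
  unfolding B4_def sum_idx ..

lemma psd_Q:
  assumes "psd n A"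
  shows "0 \<le> Re (\<Sum>a<n. \<Sum>b<n. cnj (z a) * A $$ (a,b) * z b)"
proof -
  have "vec n z \<in> carrier_vec n" by simp
  hence "0 \<le> Re (\<Sum>a<n. \<Sum>b<n. cnj (vec n z $ a) * A $$ (a,b) * vec n z $ b)"
    using assms unfolding psd_def Let_def by blast
  also have "(\<Sum>a<n. \<Sum>b<n. cnj (vec n z $ a) * A $$ (a,b) * vec n z $ b) = (\<Sum>a<n. \<Sum>b<n. cnj (z a) * A $$ (a,b) * z b)"
    by (intro sum.cong refl) simp
  finally show ?thesis .
qed

lemma psd_B4:
  fixes d D :: nat
  assumes "psd (d*D) A"
  shows "0 \<le> Re (B4 d D (\<lambda>j l j' l'. A $$ (j*D+l, j'*D+l')) x x)"
proof -
  define g where "g = (\<lambda>a. x (a div D) (a mod D))"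
  have "0 \<le> Re (\<Sum>a<d*D. \<Sum>b<d*D. cnj (g a) * A $$ (a,b) * g b)" by (rule psd_Q[OF assms])
  also have "(\<Sum>a<d*D. \<Sum>b<d*D. cnj (g a) * A $$ (a,b) * g b) = B4 d D (\<lambda>j l j' l'. A $$ (j*D+l, j'*D+l')) (\<lambda>j k. g (j*D+k)) (\<lambda>j k. g (j*D+k))"
    by (rule QF_B4)
  also have "\<dots> = B4 d D (\<lambda>j l j' l'. A $$ (j*D+l, j'*D+l')) x x"
    by (rule B4_cong) (simp_all add: g_def)
  finally show ?thesis .
qed

lemma mtrace_proj:
  assumes v: "v \<in> carrier_vec n" and A: "A \<in> carrier_mat n n"
  shows "mtrace (proj v * A) = (\<Sum>a<n. \<Sum>b<n. cnj (v $ a) * A $$ (a,b) * v $ b)"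
proof -
  have "mtrace (proj v * A) = (\<Sum>b<n. \<Sum>a<n. v $ b * cnj (v $ a) * A $$ (a,b))"
    unfolding mtrace_def using v A
    by (intro sum.cong) (auto simp: proj_def scalar_prod_def atLeast0LessThan)
  also have "\<dots> = (\<Sum>a<n. \<Sum>b<n. v $ b * cnj (v $ a) * A $$ (a,b))" by (rule sum.swap)
  also have "\<dots> = (\<Sum>a<n. \<Sum>b<n. cnj (v $ a) * A $$ (a,b) * v $ b)"
    by (intro sum.cong refl) (simp add: mult_ac)
  finally show ?thesis .
qed


lemma B4_congF:
  assumes "\<And>j l j' l'. j < d \<Longrightarrow> l < D \<Longrightarrow> j' < d \<Longrightarrow> l' < D \<Longrightarrow> F j l j' l' = F' j l j' l'"
  shows "B4 d D F x y = B4 d D F' x y"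
  unfolding B4_def using assms by (intro sum.cong refl) auto

lemma state_bound:
  fixes d D :: nat and v :: "complex vec" and A :: "complex mat" and \<delta> :: real
  assumes d0: "0 < d"
    and v: "unit_vec_state (d*D) v"
    and ent: "ent d D v \<ge> log 2 (real d) - \<delta>"
    and Apsd: "psd (d*D) A"
    and Ale: "\<And>z. Re (\<Sum>a<d*D. \<Sum>b<d*D. cnj (z a) * A $$ (a,b) * z b) \<le> Re (\<Sum>a<d*D. cnj (z a) * z a)"
    and ppt: "PPT d D A"
  shows "\<exists>r. 0 \<le> r \<and> r^2 \<le> \<delta> * ln 2 \<and>
    Re (mtrace (proj v * A)) \<le> Re (\<Sum>a<d*D. A $$ (a,a)) / real d + 2*r + r^2 - r^3"
proof -
  have vc: "v \<in> carrier_vec (d*D)" and vu: "(\<Sum>k<d*D. (cmod (v $ k))^2) = 1"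
    using v unfolding unit_vec_state_def by auto
  have Ac: "A \<in> carrier_mat (d*D) (d*D)" using Apsd unfolding psd_def by auto
  define X where "X = (\<lambda>j k. v $ (j*D+k))"
  define M4 where "M4 = (\<lambda>j l j' l'. A $$ (j*D+l, j'*D+l'))"
  have tr: "mtrace (proj v * A) = B4 d D M4 X X"
    unfolding mtrace_proj[OF vc Ac] QF_B4 M4_def X_def ..
  have Mpsd: "\<forall>x. 0 \<le> Re (B4 d D M4 x x)"
    unfolding M4_def using psd_B4[OF Apsd] by blast
  have PPT4: "\<forall>x. 0 \<le> Re (B4 d D (\<lambda>j l j' l'. M4 j l' j' l) x x)"
  proof
    fix x :: "nat \<Rightarrow> nat \<Rightarrow> complex"
    have "0 \<le> Re (B4 d D (\<lambda>j l j' l'. ptranspose d D A $$ (j*D+l, j'*D+l')) x x)"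
      using psd_B4[of d D "ptranspose d D A" x] ppt unfolding PPT_def by blast
    also have "B4 d D (\<lambda>j l j' l'. ptranspose d D A $$ (j*D+l, j'*D+l')) x x
        = B4 d D (\<lambda>j l j' l'. M4 j l' j' l) x x"
      by (rule B4_congF) (simp add: ptranspose_def M4_def prod_idx_def idx_lt)
    finally show "0 \<le> Re (B4 d D (\<lambda>j l j' l'. M4 j l' j' l) x x)" .
  qed
  have Mle: "\<forall>x. Re (B4 d D M4 x x) \<le> Re (\<Sum>j<d. \<Sum>k<D. x j k * cnj (x j k))"
  proof
    fix x :: "nat \<Rightarrow> nat \<Rightarrow> complex"
    define g where "g = (\<lambda>a. x (a div D) (a mod D))"
    have "B4 d D M4 x x = B4 d D M4 (\<lambda>j k. g (j*D+k)) (\<lambda>j k. g (j*D+k))"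
      by (rule B4_cong) (simp_all add: g_def)
    also have "\<dots> = (\<Sum>a<d*D. \<Sum>b<d*D. cnj (g a) * A $$ (a,b) * g b)"
      unfolding M4_def by (rule QF_B4[symmetric])
    finally have "Re (B4 d D M4 x x) \<le> Re (\<Sum>a<d*D. cnj (g a) * g a)" using Ale[of g] by simp
    also have "(\<Sum>a<d*D. cnj (g a) * g a) = (\<Sum>j<d. \<Sum>k<D. x j k * cnj (x j k))"
      unfolding sum_idx g_def by (intro sum.cong refl) (simp add: mult.commute)
    finally show "Re (B4 d D M4 x x) \<le> Re (\<Sum>j<d. \<Sum>k<D. x j k * cnj (x j k))" .
  qed
  have n1: "(\<Sum>j<d. \<Sum>k<D. X j k * cnj (X j k)) = 1"
  proof -
    have "(\<Sum>j<d. \<Sum>k<D. X j k * cnj (X j k)) = (\<Sum>a<d*D. v $ a * cnj (v $ a))"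
      unfolding sum_idx X_def ..
    also have "\<dots> = (\<Sum>a<d*D. complex_of_real ((cmod (v $ a))^2))"
      by (intro sum.cong refl) (rule complex_norm_square[symmetric])
    also have "\<dots> = 1" using vu by (simp only: of_real_sum[symmetric]) simp
    finally show ?thesis .
  qed
  define P where "P = ptrace_C d D (proj v)"
  have Pc: "P \<in> carrier_mat d d" unfolding P_def ptrace_C_def by simp
  have dv: "dim_vec v = d*D" using vc by simp
  have Pe: "P $$ (j,j') = (\<Sum>k<D. X j k * cnj (X j' k))" if j: "j < d" and j': "j' < d" for j j'
    unfolding P_def ptrace_C_def X_def using j j'
    by (simp add: proj_def prod_idx_def dv idx_lt)
  have "herm d (\<lambda>a b. P $$ (a,b))" unfolding herm_def
    by (auto simp: Pe cnj_sum mult.commute)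
  then obtain u lam where o: "orthon d u" and c: "complete d u" and dcP: "decomp d (\<lambda>a b. P $$ (a,b)) u lam"
    using spectral by blast
  have cp: "char_poly P = (\<Prod>k\<leftarrow>[0..<d]. [:- of_real (lam k), 1:])"
    by (rule charpoly_spec[OF Pc o c dcP])
  have entl: "log 2 (real d) - \<delta> \<le> - (\<Sum>m<d. (if lam m = 0 then 0 else lam m * log 2 (lam m)))"
    using ent unfolding ent_def P_def[symmetric] entropy_spec[OF cp] .
  have dc: "decomp d (\<lambda>a b. \<Sum>k<D. X a k * cnj (X b k)) u lam"
    using dcP unfolding decomp_def by (simp add: Pe)
  obtain r where r: "0 \<le> r" "r^2 \<le> \<delta> * ln 2"
    and b: "Re (B4 d D M4 X X) \<le> Re (\<Sum>j<d. \<Sum>k<D. M4 j k j k) / real d + 2*r + r^2 - r^3"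
    using per_state4[OF d0 o c dc n1 PPT4 Mpsd Mle entl] by blast
  have trM: "(\<Sum>j<d. \<Sum>k<D. M4 j k j k) = (\<Sum>a<d*D. A $$ (a,a))"
    unfolding sum_idx M4_def ..
  show ?thesis using r b unfolding tr trM by blast
qed




theorem mainTheorem5:
  fixes dB dC N :: nat and \<phi> M :: "nat \<Rightarrow> _" and \<delta> \<epsilon> :: real
  assumes "0 < dB" and "dB \<le> dC"
    and "\<And>i. i < N \<Longrightarrow> unit_vec_state (dB*dC) (\<phi> i)"
    and "\<delta> \<ge> 0"
    and "\<And>i. i < N \<Longrightarrow> ent dB dC (\<phi> i) \<ge> log 2 (real dB) - \<delta>"
    and "POVM (dB*dC) N M"
    and "\<And>i. i < N \<Longrightarrow> PPT dB dC (M i)"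
    and "\<And>i. i < N \<Longrightarrow> Re (mtrace (proj (\<phi> i) * M i)) \<ge> 1 - \<epsilon>"
    and "\<epsilon> + sqrt 2 * \<delta> powr (1/4) < 1"
  shows "real N \<le> real dC / (1 - \<epsilon> - sqrt 2 * \<delta> powr (1/4))"
proof -
  note d0 = assms(1) and uv = assms(3) and dl0 = assms(4) and entA = assms(5) and pptA = assms(7)
    and trA = assms(8) and h = assms(9)
  define n where "n = dB * dC"
  define \<eta> where "\<eta> = sqrt 2 * \<delta> powr (1/4)"
  have Mpsd: "\<And>i. i < N \<Longrightarrow> psd n (M i)" and
    Msum: "\<And>a b. a < n \<Longrightarrow> b < n \<Longrightarrow> (\<Sum>i<N. M i $$ (a,b)) = (if a = b then 1 else 0)"
    using assms(6) unfolding POVM_def n_def by auto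
  define Q where "Q = (\<lambda>i z. \<Sum>a<n. \<Sum>b<n. cnj (z a) * M i $$ (a,b) * z b)"
  have sumQ: "(\<Sum>i<N. Q i z) = (\<Sum>a<n. cnj (z a) * z a)" for z
  proof -
    have "(\<Sum>i<N. Q i z) = (\<Sum>a<n. \<Sum>b<n. \<Sum>i<N. cnj (z a) * M i $$ (a,b) * z b)"
      unfolding Q_def by (rule sum3_rot)
    also have "\<dots> = (\<Sum>a<n. \<Sum>b<n. cnj (z a) * (\<Sum>i<N. M i $$ (a,b)) * z b)"
      by (intro sum.cong refl) (simp add: sum_distrib_left sum_distrib_right)
    also have "\<dots> = (\<Sum>a<n. \<Sum>b<n. cnj (z a) * z b * (if a = b then 1 else 0))"
      by (intro sum.cong refl) (simp add: Msum mult_ac)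
    also have "\<dots> = (\<Sum>a<n. cnj (z a) * z a)"
      by (intro sum.cong refl) (simp add: if_distrib cong: if_cong)
    finally show ?thesis .
  qed
  have Ale: "Re (Q i z) \<le> Re (\<Sum>a<n. cnj (z a) * z a)" if i: "i < N" for i z
  proof -
    have "Re (Q i z) \<le> (\<Sum>i'<N. Re (Q i' z))"
      by (rule member_le_sum) (use i Mpsd psd_Q in \<open>auto simp: Q_def\<close>)
    also have "\<dots> = Re (\<Sum>a<n. cnj (z a) * z a)" by (simp add: sumQ[symmetric] Re_sum)
    finally show ?thesis .
  qed
  define T where "T = (\<lambda>i. Re (\<Sum>a<n. M i $$ (a,a)))"
  have per: "\<exists>r. 0 \<le> r \<and> r^2 \<le> \<delta> * ln 2 \<and> Re (mtrace (proj (\<phi> i) * M i)) \<le> T i / real dB + 2*r + r^2 - r^3"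
    if i: "i < N" for i
    unfolding T_def n_def
    by (rule state_bound[OF d0 uv[OF i] entA[OF i] Mpsd[OF i, unfolded n_def] _ pptA[OF i]])
       (use Ale[OF i] in \<open>simp add: Q_def n_def\<close>)
  show ?thesis
  proof (cases "N = 0")
    case True
    have "0 < 1 - \<epsilon> - \<eta>" using h unfolding \<eta>_def by simp
    thus ?thesis using True unfolding \<eta>_def by simp
  next
    case False
    hence N0: "0 < N" by simp
    have le1: "Re (mtrace (proj (\<phi> i) * M i)) \<le> 1" if i: "i < N" for i
    proof -
      have vc: "\<phi> i \<in> carrier_vec n" and vu: "(\<Sum>k<n. (cmod (\<phi> i $ k))^2) = 1"
        using uv[OF i] unfolding unit_vec_state_def n_def by auto
      have Mc: "M i \<in> carrier_mat n n" using Mpsd[OF i] unfolding psd_def by auto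
      have "Re (mtrace (proj (\<phi> i) * M i)) = Re (Q i (\<lambda>a. \<phi> i $ a))"
        unfolding mtrace_proj[OF vc Mc] Q_def ..
      also have "\<dots> \<le> Re (\<Sum>a<n. cnj (\<phi> i $ a) * \<phi> i $ a)" by (rule Ale[OF i])
      also have "\<dots> = (\<Sum>a<n. (cmod (\<phi> i $ a))^2)"
        by (simp add: Re_sum complex_mult_cnj cmod_def power2_eq_square)
      finally show ?thesis using vu by simp
    qed
    have e0: "0 \<le> \<epsilon>" using trA[OF N0] le1[OF N0] by simp
    have bnd: "1 - \<epsilon> \<le> T i / real dB + \<eta>" if i: "i < N" for i
    proof -
      obtain r where r: "0 \<le> r" "r^2 \<le> \<delta> * ln 2"
        and b: "Re (mtrace (proj (\<phi> i) * M i)) \<le> T i / real dB + 2*r + r^2 - r^3"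
        using per[OF i] by blast
      have "2*r + r^2 - r^3 \<le> \<eta>" unfolding \<eta>_def by (rule numeric[OF dl0 e0 h r])
      thus ?thesis using b trA[OF i] by simp
    qed
    have sumT: "(\<Sum>i<N. T i) = real n"
    proof -
      have "(\<Sum>i<N. T i) = Re (\<Sum>a<n. \<Sum>i<N. M i $$ (a,a))"
        unfolding T_def by (simp add: Re_sum) (rule sum.swap)
      also have "\<dots> = Re (\<Sum>a<n. (1::complex))" by (simp add: Msum)
      finally show ?thesis by simp
    qed
    have "real N * (1 - \<epsilon>) = (\<Sum>i<N. 1 - \<epsilon>)" by simp
    also have "\<dots> \<le> (\<Sum>i<N. T i / real dB + \<eta>)" by (intro sum_mono) (simp add: bnd)
    also have "\<dots> = (\<Sum>i<N. T i) / real dB + real N * \<eta>" by (simp add: sum.distrib sum_divide_distrib)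
    also have "\<dots> = real dC + real N * \<eta>" using sumT d0 by (simp add: n_def)
    finally have "real N * (1 - \<epsilon> - \<eta>) \<le> real dC" by (simp add: algebra_simps)
    moreover have "0 < 1 - \<epsilon> - \<eta>" using h unfolding \<eta>_def by simp
    ultimately show ?thesis unfolding \<eta>_def by (simp add: pos_le_divide_eq)
  qed
qed


end
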